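(* Let $B_i\colon\mathbb{R}^d\to\mathbb{R}^{d_i}$ ($i=1,\dots,k$) be surjective linear maps and $c_i>0$. Suppose $p\ge1$ and $\theta_1,\dots,\theta_k$ are nonzero real numbers with $\theta_1+\dots+\theta_k=1$ such that $\theta_i>0$ for precisely one index $i$. Define $p_i$ by $c_i\left(1-\frac1p\right)=\theta_i\left(1-\frac1{p_i}\right)$. Then for non-negative measurable $f$ on $\mathbb{R}^d$, $$\|f\|_{L^p(\mathbb{R}^d)}\ge\mathrm{BL}(\mathbf{B},\mathbf{c})^{\frac1p-1}\prod_{i=1}^k\|(B_i)_*f\|_{L^{p_i}(\mathbb{R}^{d_i})}^{\theta_i}.$$
   Context: $\mathrm{BL}(\mathbf{B},\mathbf{c})\in(0,\infty]$ is the best constant such that $\int_{\mathbb{R}^d}\prod_i f_i(B_ix)^{c_i}dx\le\mathrm{BL}(\mathbf{B},\mathbf{c})\prod_i(\int_{\mathbb{R}^{d_i}}f_i)^{c_i}$ for all non-negative integrable $f_i$. For surjective linear $B\colon\mathbb{R}^d\to\mathbb{R}^{d'}$ and $f\ge0$ on $\mathbb{R}^d$, the pushforward $B_*f$ is defined by $\int_{\mathbb{R}^{d'}}B_*f(y)F(y)\,dy=\int_{\mathbb{R}^d}f(x)F(Bx)\,dx$ for all measurable $F\ge0$. *)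

theory Defs
  imports "HOL-Analysis.Analysis" "HOL-Probability.Essential_Supremum"
begin

text \<open>Lebesgue (Borel) measure on R^n, realised as the product measure on
  extensional functions {..<n} -> real.\<close>
definition lebn :: "nat \<Rightarrow> (nat \<Rightarrow> real) measure" where
  "lebn n = PiM {..<n} (\<lambda>_. lborel)"

definition matapp :: "nat \<Rightarrow> nat \<Rightarrow> (nat \<Rightarrow> nat \<Rightarrow> real) \<Rightarrow> (nat \<Rightarrow> real) \<Rightarrow> (nat \<Rightarrow> real)" where
  "matapp n m M x = (\<lambda>r\<in>{..<n}. \<Sum>j<m. M r j * x j)"

definition epow :: "ennreal \<Rightarrow> real \<Rightarrow> ennreal" where
  "epow a r =
     (if a = 0 then (if r > 0 then 0 else if r = 0 then 1 else \<infinity>)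
      else if a = \<infinity> then (if r > 0 then \<infinity> else if r = 0 then 1 else 0)
      else ennreal (enn2real a powr r))"

text \<open>L^p "norm" parametrised by q = 1/p (q = 0 means p = inf):
  (int g^p)^(1/p) for q \<noteq> 0 (including negative p), esssup for q = 0.\<close>
definition Lnorm_inv :: "'a measure \<Rightarrow> real \<Rightarrow> ('a \<Rightarrow> ennreal) \<Rightarrow> ennreal" where
  "Lnorm_inv M q g =
     (if q = 0 then esssup M g else epow (\<integral>\<^sup>+ x. epow (g x) (1 / q) \<partial>M) q)"

definition BL :: "nat \<Rightarrow> nat \<Rightarrow> (nat \<Rightarrow> nat) \<Rightarrow> (nat \<Rightarrow> nat \<Rightarrow> nat \<Rightarrow> real)
                   \<Rightarrow> (nat \<Rightarrow> real) \<Rightarrow> ennreal" where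
  "BL d k dd B c = Inf {C. \<forall>f. (\<forall>i\<in>{1..k}. f i \<in> borel_measurable (lebn (dd i))
                               \<and> (\<integral>\<^sup>+ y. f i y \<partial>lebn (dd i)) < \<infinity>) \<longrightarrow>
        (\<integral>\<^sup>+ x. (\<Prod>i\<in>{1..k}. epow (f i (matapp (dd i) d (B i) x)) (c i)) \<partial>lebn d)
          \<le> C * (\<Prod>i\<in>{1..k}. epow (\<integral>\<^sup>+ y. f i y \<partial>lebn (dd i)) (c i))}"

text \<open>g is (a version of) the pushforward B_* f of f under the map B : R^m -> R^n.\<close>
definition is_pushforward :: "nat \<Rightarrow> nat \<Rightarrow> ((nat \<Rightarrow> real) \<Rightarrow> (nat \<Rightarrow> real))
        \<Rightarrow> ((nat \<Rightarrow> real) \<Rightarrow> ennreal) \<Rightarrow> ((nat \<Rightarrow> real) \<Rightarrow> ennreal) \<Rightarrow> bool" where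
  "is_pushforward m n Bm f g \<longleftrightarrow> g \<in> borel_measurable (lebn n) \<and>
     (\<forall>F \<in> borel_measurable (lebn n).
        (\<integral>\<^sup>+ y. g y * F y \<partial>lebn n) = (\<integral>\<^sup>+ x. f x * F (Bm x) \<partial>lebn m))"

end

theory Submission
  imports Defs
begin


lemma epow_0_exp[simp]: "epow a 0 = 1"
  by (simp add: epow_def enn2real_eq_0_iff)

lemma epow_real: "0 < x \<Longrightarrow> epow (ennreal x) r = ennreal (x powr r)"
  by (simp add: epow_def)

lemma epow_1[simp]: "epow a 1 = a"
  by (cases a) (auto simp: epow_def)

lemma epow_zero_pos[simp]: "r > 0 \<Longrightarrow> epow 0 r = 0"
  by (simp add: epow_def)
lemma epow_zero_neg[simp]: "r < 0 \<Longrightarrow> epow 0 r = top"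
  by (simp add: epow_def)
lemma epow_top_pos[simp]: "r > 0 \<Longrightarrow> epow top r = top"
  by (simp add: epow_def)
lemma epow_top_neg[simp]: "r < 0 \<Longrightarrow> epow top r = 0"
  by (simp add: epow_def)

lemma epow_eq_0_iff: "r > 0 \<Longrightarrow> epow a r = 0 \<longleftrightarrow> a = 0"
  by (cases a) (auto simp: epow_def)
lemma epow_eq_top_iff: "r > 0 \<Longrightarrow> epow a r = top \<longleftrightarrow> a = top"
  by (cases a) (auto simp: epow_def)
lemma epow_eq_0_iff_neg: "r < 0 \<Longrightarrow> epow a r = 0 \<longleftrightarrow> a = top"
  by (cases a) (auto simp: epow_def)
lemma epow_eq_top_iff_neg: "r < 0 \<Longrightarrow> epow a r = top \<longleftrightarrow> a = 0"
  by (cases a) (auto simp: epow_def)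

lemma epow_epow: "epow (epow a r) s = epow a (r * s)"
proof (cases "a = 0 \<or> a = top")
  case True
  then show ?thesis
    by (auto simp: epow_def zero_less_mult_iff mult_less_0_iff)
next
  case False
  then obtain x where x: "a = ennreal x" "x > 0"
    by (cases a) (auto simp: ennreal_neq_top)
  then show ?thesis
    by (simp add: epow_real powr_powr)
qed

lemma epow_mult: assumes "r \<ge> 0" shows "epow (a * b) r = epow a r * epow b r"
proof (cases "r = 0")
  case True then show ?thesis by simp
next
  case False
  with assms have r: "r > 0" by simp
  show ?thesis
  proof (cases "a = 0 \<or> b = 0")
    case True then show ?thesis using r by auto
  next
    case False
    show ?thesis
    proof (cases "a = top \<or> b = top")
      case True then show ?thesis using r False
        by (auto simp: ennreal_mult_top ennreal_top_mult epow_eq_0_iff)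
    next
      case F2: False
      then obtain x y where "a = ennreal x" "b = ennreal y" "x > 0" "y > 0"
        using False by (cases a; cases b) auto
      then show ?thesis
        by (simp add: epow_real ennreal_mult[symmetric] powr_mult)
    qed
  qed
qed

lemma epow_mono: assumes "r \<ge> 0" "a \<le> b" shows "epow a r \<le> epow b r"
proof (cases "r = 0")
  case True then show ?thesis by simp
next
  case False
  with assms have r: "r > 0" by simp
  show ?thesis
  proof (cases "a = 0 \<or> b = top")
    case True then show ?thesis using r by auto
  next
    case False
    then obtain x y where xy: "a = ennreal x" "b = ennreal y" "x > 0" "y \<ge> x"
      using assms(2) by (cases a; cases b) (auto simp: ennreal_neq_top top_unique)
    then show ?thesis
      using r by (simp add: epow_real ennreal_leI powr_mono2)
  qed
qed

lemma epow_mono_neg: assumes "r \<le> 0" "a \<le> b" shows "epow b r \<le> epow a r"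
proof (cases "r = 0")
  case True then show ?thesis by simp
next
  case False
  with assms have r: "r < 0" by simp
  show ?thesis
  proof (cases "a = 0 \<or> b = top")
    case True then show ?thesis using r by auto
  next
    case False
    then obtain x y where xy: "a = ennreal x" "b = ennreal y" "x > 0" "y \<ge> x"
      using assms(2) by (cases a; cases b) (auto simp: ennreal_neq_top top_unique)
    then show ?thesis
      using r by (simp add: epow_real ennreal_leI powr_mono2')
  qed
qed

lemma epow_add_real: "0 < x \<Longrightarrow> epow (ennreal x) (r + s) = epow (ennreal x) r * epow (ennreal x) s"
  by (simp add: epow_real powr_add ennreal_mult)

lemma borel_measurable_epow[measurable]:
  assumes [measurable]: "f \<in> borel_measurable M"
  shows "(\<lambda>x. epow (f x) r) \<in> borel_measurable M"
  unfolding epow_def by measurable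

lemma epow_one_base[simp]: "epow 1 r = 1"
  by (simp add: epow_def)

lemma epow_prod: assumes "r \<ge> 0" "finite S"
  shows "epow (\<Prod>i\<in>S. a i) r = (\<Prod>i\<in>S. epow (a i) r)"
  using assms(2) by induction (auto simp: epow_mult[OF assms(1)])


lemma weighted_amgm:
  fixes z w :: "'i \<Rightarrow> real"
  assumes "finite S" "S \<noteq> {}" "\<And>i. i \<in> S \<Longrightarrow> z i > 0" "\<And>i. i \<in> S \<Longrightarrow> w i \<ge> 0"
    "(\<Sum>i\<in>S. w i) = 1"
  shows "(\<Prod>i\<in>S. z i powr w i) \<le> (\<Sum>i\<in>S. w i * z i)"
proof -
  have "ln (\<Sum>i\<in>S. w i *\<^sub>R z i) \<ge> (\<Sum>i\<in>S. w i * ln (z i))"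
  proof (rule concave_on_sum[OF assms(1,2) ln_concave assms(5)])
    show "\<And>i. i \<in> S \<Longrightarrow> 0 \<le> w i" by (rule assms(4))
    show "\<And>i. i \<in> S \<Longrightarrow> z i \<in> {0<..}" using assms(3) by simp
  qed
  then have L: "ln (\<Sum>i\<in>S. w i * z i) \<ge> (\<Sum>i\<in>S. w i * ln (z i))" by simp
  have pos: "(\<Sum>i\<in>S. w i * z i) > 0"
  proof -
    have "\<exists>j\<in>S. w j \<noteq> 0"
    proof (rule ccontr)
      assume "\<not> ?thesis"
      then have "(\<Sum>i\<in>S. w i) = 0" by simp
      then show False using assms(5) by simp
    qed
    then obtain j where "j \<in> S" "w j > 0"
      using assms(4) by (auto simp: less_le)
    then have "w j * z j > 0" using assms(3) by simp
    also have "w j * z j \<le> (\<Sum>i\<in>S. w i * z i)"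
      using \<open>j \<in> S\<close> assms(1,3,4) by (intro member_le_sum) (auto intro: mult_nonneg_nonneg less_imp_le)
    finally show ?thesis .
  qed
  have "exp (\<Sum>i\<in>S. w i * ln (z i)) \<le> (\<Sum>i\<in>S. w i * z i)"
    using L pos by (subst (asm) ln_ge_iff) auto
  moreover have "exp (\<Sum>i\<in>S. w i * ln (z i)) = (\<Prod>i\<in>S. z i powr w i)"
    unfolding exp_sum[OF assms(1)] using assms(3) by (intro prod.cong refl) (force simp: powr_def)
  ultimately show ?thesis by simp
qed

lemma holder_pos:
  fixes F :: "'i \<Rightarrow> 'a \<Rightarrow> ennreal" and w :: "'i \<Rightarrow> real"
  assumes S: "finite S" "S \<noteq> {}" and F[measurable]: "\<And>i. i \<in> S \<Longrightarrow> F i \<in> borel_measurable M"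
    and w: "\<And>i. i \<in> S \<Longrightarrow> w i > 0" and ws: "(\<Sum>i\<in>S. w i) = 1"
  shows "(\<integral>\<^sup>+x. (\<Prod>i\<in>S. epow (F i x) (w i)) \<partial>M) \<le> (\<Prod>i\<in>S. epow (\<integral>\<^sup>+x. F i x \<partial>M) (w i))"
proof (cases "\<exists>i\<in>S. (\<integral>\<^sup>+x. F i x \<partial>M) = 0")
  case True
  then obtain j where j: "j \<in> S" "(\<integral>\<^sup>+x. F j x \<partial>M) = 0" by auto
  then have "AE x in M. F j x = 0" using F by (simp add: nn_integral_0_iff_AE)
  then have "AE x in M. (\<Prod>i\<in>S. epow (F i x) (w i)) = 0"
    by eventually_elim (use j w S in \<open>auto simp: epow_eq_0_iff intro!: bexI[of _ j]\<close>)
  then have "(\<integral>\<^sup>+x. (\<Prod>i\<in>S. epow (F i x) (w i)) \<partial>M) = 0"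
    by (simp add: nn_integral_0_iff_AE)
  then show ?thesis by simp
next
  case False
  note nz = False
  show ?thesis
  proof (cases "\<exists>i\<in>S. (\<integral>\<^sup>+x. F i x \<partial>M) = top")
    case True
    then have "(\<Prod>i\<in>S. epow (\<integral>\<^sup>+x. F i x \<partial>M) (w i)) = top"
      using nz w S True by (auto simp: ennreal_prod_eq_top epow_eq_0_iff epow_eq_top_iff)
    then show ?thesis by simp
  next
    case False
    define I where "I i = enn2real (\<integral>\<^sup>+x. F i x \<partial>M)" for i
    have I: "i \<in> S \<Longrightarrow> (\<integral>\<^sup>+x. F i x \<partial>M) = ennreal (I i) \<and> I i > 0" for i
      using nz False unfolding I_def
      by (cases "(\<integral>\<^sup>+x. F i x \<partial>M)") (auto simp: enn2real_nonneg ennreal_neq_top less_le)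
    define C where "C = (\<Prod>i\<in>S. I i powr w i)"
    have Cpos: "C > 0" unfolding C_def using I by (intro prod_pos) force
    have RHS: "(\<Prod>i\<in>S. epow (\<integral>\<^sup>+x. F i x \<partial>M) (w i)) = ennreal C"
      unfolding C_def using I by (simp add: epow_real prod_ennreal)
    have pw: "(\<Prod>i\<in>S. epow (F i x) (w i)) \<le> ennreal C * (\<Sum>i\<in>S. ennreal (w i / I i) * F i x)" for x
    proof (cases "\<exists>i\<in>S. F i x = 0")
      case True
      then obtain j where j: "j \<in> S" "F j x = 0" by auto
      then have "(\<Prod>i\<in>S. epow (F i x) (w i)) = 0"
        using w S by (auto simp: epow_eq_0_iff intro!: bexI[of _ j])
      then show ?thesis by (metis zero_le)
    next
      case F0: False
      show ?thesis
      proof (cases "\<exists>i\<in>S. F i x = top")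
        case True
        then obtain j where j: "j \<in> S" "F j x = top" by auto
        have "w j / I j > 0" using j w[of j] I[of j] by simp
        then have "ennreal (w j / I j) * F j x = top" using j by (simp add: ennreal_mult_top) (metis div_0 div_by_0 less_irrefl)
        then have "(\<Sum>i\<in>S. ennreal (w i / I i) * F i x) = top"
          using j S by (simp add: ennreal_sum_eq_top) (metis)
        then show ?thesis using Cpos by (simp add: ennreal_mult_top)
      next
        case False
        define y where "y i = enn2real (F i x)" for i
        have y: "i \<in> S \<Longrightarrow> F i x = ennreal (y i) \<and> y i > 0" for i
          using F0 False unfolding y_def
          by (cases "F i x") (auto simp: enn2real_nonneg ennreal_neq_top less_le)
        have "(\<Prod>i\<in>S. epow (F i x) (w i)) = ennreal (\<Prod>i\<in>S. y i powr w i)"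
          using y by (simp add: epow_real prod_ennreal)
        also have "(\<Prod>i\<in>S. y i powr w i) = C * (\<Prod>i\<in>S. (y i / I i) powr w i)"
          unfolding C_def prod.distrib[symmetric]
        proof (intro prod.cong refl)
          fix i assume "i \<in> S"
          then have "I i > 0" "y i > 0" using y I by auto
          then show "y i powr w i = I i powr w i * (y i / I i) powr w i"
            by (simp add: powr_divide less_imp_le)
        qed
        also have "\<dots> \<le> C * (\<Sum>i\<in>S. w i * (y i / I i))"
        proof (rule mult_left_mono)
          show "(\<Prod>i\<in>S. (y i / I i) powr w i) \<le> (\<Sum>i\<in>S. w i * (y i / I i))"
          proof (rule weighted_amgm[OF S])
            fix i assume i: "i \<in> S"
            show "0 < y i / I i" using y[OF i] I[OF i] by simp
            show "0 \<le> w i" using w[OF i] by simp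
          qed (rule ws)
        qed (use Cpos in simp)
        also have "ennreal (C * (\<Sum>i\<in>S. w i * (y i / I i))) = ennreal C * (\<Sum>i\<in>S. ennreal (w i / I i) * F i x)"
        proof -
          have nn: "0 \<le> w i * (y i / I i)" if "i \<in> S" for i
            using y[OF that] I[OF that] w[OF that] by simp
          have "ennreal (C * (\<Sum>i\<in>S. w i * (y i / I i))) = ennreal C * ennreal (\<Sum>i\<in>S. w i * (y i / I i))"
            using Cpos nn by (intro ennreal_mult) (auto intro: sum_nonneg)
          also have "ennreal (\<Sum>i\<in>S. w i * (y i / I i)) = (\<Sum>i\<in>S. ennreal (w i * (y i / I i)))"
            using nn by (rule sum_ennreal[symmetric])
          also have "\<dots> = (\<Sum>i\<in>S. ennreal (w i / I i) * F i x)"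
          proof (intro sum.cong refl)
            fix i assume i: "i \<in> S"
            have "ennreal (w i * (y i / I i)) = ennreal (w i / I i) * ennreal (y i)"
              using y[OF i] I[OF i] w[OF i] by (simp add: ennreal_mult[symmetric])
            then show "ennreal (w i * (y i / I i)) = ennreal (w i / I i) * F i x"
              using y[OF i] by simp
          qed
          finally show ?thesis .
        qed
        finally show ?thesis by (simp add: ennreal_leI)
      qed
    qed
    have "(\<integral>\<^sup>+x. (\<Prod>i\<in>S. epow (F i x) (w i)) \<partial>M) \<le> (\<integral>\<^sup>+x. ennreal C * (\<Sum>i\<in>S. ennreal (w i / I i) * F i x) \<partial>M)"
      by (intro nn_integral_mono pw)
    also have "\<dots> = ennreal C * (\<integral>\<^sup>+x. (\<Sum>i\<in>S. ennreal (w i / I i) * F i x) \<partial>M)"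
      by (rule nn_integral_cmult) (use F in measurable)
    also have "(\<integral>\<^sup>+x. (\<Sum>i\<in>S. ennreal (w i / I i) * F i x) \<partial>M) = (\<Sum>i\<in>S. (\<integral>\<^sup>+x. ennreal (w i / I i) * F i x \<partial>M))"
      by (rule nn_integral_sum) (use F in measurable)
    also have "\<dots> = (\<Sum>i\<in>S. ennreal (w i / I i) * (\<integral>\<^sup>+x. F i x \<partial>M))"
      by (intro sum.cong refl nn_integral_cmult F)
    also have "(\<Sum>i\<in>S. ennreal (w i / I i) * (\<integral>\<^sup>+x. F i x \<partial>M)) = (\<Sum>i\<in>S. ennreal (w i))"
    proof (intro sum.cong refl)
      fix i assume i: "i \<in> S"
      then show "ennreal (w i / I i) * integral\<^sup>N M (F i) = ennreal (w i)"
        using I[OF i] w[OF i] by (simp add: ennreal_mult[symmetric])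
    qed
    also have "\<dots> = 1" using ws w by (simp add: sum_ennreal less_imp_le)
    finally show ?thesis using RHS by simp
  qed
qed

lemma holder_multi:
  fixes F :: "'i \<Rightarrow> 'a \<Rightarrow> ennreal" and w :: "'i \<Rightarrow> real"
  assumes S: "finite S" and F[measurable]: "\<And>i. i \<in> S \<Longrightarrow> F i \<in> borel_measurable M"
    and w: "\<And>i. i \<in> S \<Longrightarrow> w i \<ge> 0" and ws: "(\<Sum>i\<in>S. w i) = 1"
  shows "(\<integral>\<^sup>+x. (\<Prod>i\<in>S. epow (F i x) (w i)) \<partial>M) \<le> (\<Prod>i\<in>S. epow (\<integral>\<^sup>+x. F i x \<partial>M) (w i))"
proof -
  define S' where "S' = {i\<in>S. w i > 0}"
  have S'S: "S' \<subseteq> S" "finite S'" using S by (auto simp: S'_def)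
  have "(\<Sum>i\<in>S'. w i) = (\<Sum>i\<in>S. w i)"
    using S by (intro sum.mono_neutral_left) (auto simp: S'_def less_le w)
  then have ws': "(\<Sum>i\<in>S'. w i) = 1" using ws by simp
  then have "S' \<noteq> {}" by auto
  have P: "(\<Prod>i\<in>S. epow (G i) (w i)) = (\<Prod>i\<in>S'. epow (G i) (w i))" for G
    using S by (intro prod.mono_neutral_right) (auto simp: S'_def less_le w)
  show ?thesis
    unfolding P
  proof (rule holder_pos[OF S'S(2) \<open>S' \<noteq> {}\<close> _ _ ws'])
    show "\<And>i. i \<in> S' \<Longrightarrow> F i \<in> borel_measurable M" using F S'S by auto
    show "\<And>i. i \<in> S' \<Longrightarrow> 0 < w i" by (auto simp: S'_def)
  qed
qed


lemma real_step:
  fixes J M0 q b :: real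
  assumes "J > 0" "J \<le> M0 * J powr b" "q + b = 1"
  shows "J powr q \<le> M0"
proof -
  have "J = J powr q * J powr b" using assms(1,3) by (simp add: powr_add[symmetric])
  then have "J powr q * J powr b \<le> M0 * J powr b" using assms(2) by simp
  then show ?thesis using assms(1) by simp
qed

lemma AE_False_iff: "(AE x in M. False) \<longleftrightarrow> emeasure M (space M) = 0"
  using ae_filter_eq_bot_iff[of M] by (simp add: eventually_False)

lemma pos_integral_of_pos:
  assumes [measurable]: "w \<in> borel_measurable M" and "\<And>x. x \<in> space M \<Longrightarrow> w x > 0"
    and "emeasure M (space M) \<noteq> 0"
  shows "(\<integral>\<^sup>+x. w x \<partial>M) \<noteq> 0"
proof
  assume "(\<integral>\<^sup>+x. w x \<partial>M) = 0"
  then have "AE x in M. w x = 0" by (simp add: nn_integral_0_iff_AE)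
  then have "AE x in M. False" by (rule AE_mp) (intro AE_I2 impI, metis assms(2) less_irrefl)
  then show False using assms(3) by (simp add: AE_False_iff)
qed


locale dualctx =
  fixes M :: "'a measure" and g w :: "'a \<Rightarrow> ennreal" and q M0 :: real
  assumes g[measurable]: "g \<in> borel_measurable M"
    and w[measurable]: "w \<in> borel_measurable M"
    and wint: "(\<integral>\<^sup>+x. w x \<partial>M) \<noteq> top"
    and wpos: "\<And>x. x \<in> space M \<Longrightarrow> 0 < w x \<and> w x < top"
    and sp: "emeasure M (space M) \<noteq> 0"
    and M0: "M0 \<ge> 0"
    and H: "\<And>h. h \<in> borel_measurable M \<Longrightarrow> (\<integral>\<^sup>+x. h x \<partial>M) \<noteq> 0 \<Longrightarrow> (\<integral>\<^sup>+x. h x \<partial>M) \<noteq> top \<Longrightarrow>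
             (\<integral>\<^sup>+x. g x * epow (h x) (1 - q) \<partial>M) \<le> ennreal M0 * epow (\<integral>\<^sup>+x. h x \<partial>M) (1 - q)"
begin

lemma wint_pos: "(\<integral>\<^sup>+x. w x \<partial>M) \<noteq> 0"
  using pos_integral_of_pos[OF w _ sp] wpos by auto

lemma dual_pos:
  assumes q: "0 < q" "q < 1"
  shows "Lnorm_inv M q g \<le> ennreal M0"
proof -
  define b where "b = 1 - q"
  have b: "b > 0" "q + b = 1" using q by (auto simp: b_def)
  define G where "G x = epow (g x) (1 / q)" for x
  define h where "h n x = min (G x) (of_nat n * w x)" for n x
  have G[measurable]: "G \<in> borel_measurable M" unfolding G_def by measurable
  have h[measurable]: "h n \<in> borel_measurable M" for n unfolding h_def by measurable
  have pw: "h n x \<le> g x * epow (h n x) b" if x: "x \<in> space M" for n x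
  proof -
    have t1: "h n x \<le> G x" and t2: "h n x \<le> of_nat n * w x" by (auto simp: h_def)
    have tfin: "h n x < top"
      using t2 wpos[OF x] by (metis ennreal_mult_less_top ennreal_of_nat_neq_top le_less_trans top.not_eq_extremum)
    show ?thesis
    proof (cases "h n x = 0")
      case True then show ?thesis by simp
    next
      case t0: False
      show ?thesis
      proof (cases "g x = top")
        case True
        have "epow (h n x) b \<noteq> 0" using t0 b by (simp add: epow_eq_0_iff)
        then show ?thesis using True by (simp add: ennreal_top_mult)
      next
        case False
        have "g x \<noteq> 0"
        proof
          assume "g x = 0"
          then have "G x = 0" using q by (simp add: G_def)
          then show False using t1 t0 by simp
        qed
        then obtain y where y: "g x = ennreal y" "y > 0" using False
          by (cases "g x") (auto simp: less_le)
        obtain s where s: "h n x = ennreal s" "s > 0" using t0 tfin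
          by (cases "h n x") (auto simp: less_le)
        have "ennreal s \<le> ennreal (y powr (1/q))" using t1 y s by (simp add: G_def epow_real)
        then have "s \<le> y powr (1/q)" using y by (simp add: ennreal_le_iff)
        then have "s powr q \<le> (y powr (1/q)) powr q" using s q by (intro powr_mono2) auto
        then have sy: "s powr q \<le> y" using y q by (simp add: powr_powr)
        have "s = s powr q * s powr b" using s b by (simp add: powr_add[symmetric])
        also have "\<dots> \<le> y * s powr b" using sy by (intro mult_right_mono) auto
        finally have "ennreal s \<le> ennreal (y * s powr b)" by (rule ennreal_leI)
        then show ?thesis using y s by (simp add: epow_real ennreal_mult)
      qed
    qed
  qed
  have bound: "(\<integral>\<^sup>+x. h n x \<partial>M) \<le> epow (ennreal M0) (1/q)" for n
  proof -
    define J where "J = (\<integral>\<^sup>+x. h n x \<partial>M)"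
    have "J \<le> (\<integral>\<^sup>+x. of_nat n * w x \<partial>M)" unfolding J_def by (intro nn_integral_mono) (simp add: h_def)
    also have "\<dots> = of_nat n * (\<integral>\<^sup>+x. w x \<partial>M)" by (rule nn_integral_cmult) simp
    also have "\<dots> < top" by (metis ennreal_mult_less_top ennreal_of_nat_neq_top less_top wint)
    finally have Jfin: "J < top" .
    show ?thesis
    proof (cases "J = 0")
      case True then show ?thesis by (simp add: J_def)
    next
      case False
      have "J \<le> (\<integral>\<^sup>+x. g x * epow (h n x) b \<partial>M)"
        unfolding J_def by (intro nn_integral_mono pw)
      also have "\<dots> \<le> ennreal M0 * epow J b"
        using H[of "h n"] False Jfin by (simp add: J_def b_def)
      finally have J1: "J \<le> ennreal M0 * epow J b" .
      obtain j where j: "J = ennreal j" "j > 0" using False Jfin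
        by (cases J) (auto simp: less_le)
      have "ennreal j \<le> ennreal (M0 * j powr b)"
        using J1 j M0 by (simp add: epow_real ennreal_mult)
      then have "j \<le> M0 * j powr b" using M0 by (simp add: ennreal_le_iff)
      then have jq: "j powr q \<le> M0" by (rule real_step[OF j(2) _ b(2)])
      have "j powr q > 0" using j by simp
      then have M0p: "M0 > 0" using jq by linarith
      have "j = (j powr q) powr (1/q)" using j q by (simp add: powr_powr)
      also have "\<dots> \<le> M0 powr (1/q)" using jq q j by (intro powr_mono2) auto
      finally show ?thesis using j M0p by (simp add: epow_real ennreal_leI J_def[symmetric])
    qed
  qed
  have inc: "incseq h"
    unfolding h_def by (intro incseq_SucI le_funI min.mono order.refl mult_right_mono) auto
  have sup: "(SUP n. h n x) = G x" if x: "x \<in> space M" for x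
  proof -
    have "(SUP n. h n x) = inf (G x) (SUP n. of_nat n * w x)"
      unfolding h_def inf_min[symmetric] by (rule inf_SUP[symmetric])
    also have "(SUP n. of_nat n * w x) = (SUP n. of_nat n) * w x"
      by (rule SUP_mult_right_ennreal[symmetric])
    also have "\<dots> = top"
    proof -
      have "w x \<noteq> 0" using wpos[OF x] by (metis less_irrefl)
      then show ?thesis by (simp add: ennreal_SUP_of_nat_eq_top ennreal_top_mult)
    qed
    finally show ?thesis by simp
  qed
  have "(\<integral>\<^sup>+x. G x \<partial>M) = (\<integral>\<^sup>+x. (SUP n. h n x) \<partial>M)"
    by (intro nn_integral_cong) (simp add: sup)
  also have "\<dots> = (SUP n. \<integral>\<^sup>+x. h n x \<partial>M)"
    by (rule nn_integral_monotone_convergence_SUP[OF inc h])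
  also have "\<dots> \<le> epow (ennreal M0) (1/q)" by (intro SUP_least bound)
  finally have "epow (\<integral>\<^sup>+x. G x \<partial>M) q \<le> epow (epow (ennreal M0) (1/q)) q"
    using q by (intro epow_mono) auto
  then show ?thesis using q by (simp add: Lnorm_inv_def G_def epow_epow)
qed


lemma dual_zero:
  assumes q: "q = 0"
  shows "Lnorm_inv M q g \<le> ennreal M0"
proof (rule ccontr)
  assume "\<not> ?thesis"
  then have lt: "ennreal M0 < esssup M g" using q by (simp add: Lnorm_inv_def not_le)
  then obtain z where z: "ennreal M0 < z" "z < esssup M g" using dense by blast
  then have "z \<noteq> top" by (auto simp: top_unique)
  then obtain l where l: "z = ennreal l" "l \<ge> 0" by (cases z) auto
  have lM: "M0 < l" using z l M0 by (simp add: ennreal_less_iff)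
  define E where "E = {x \<in> space M. g x > z}"
  have E[measurable]: "E \<in> sets M" unfolding E_def by measurable
  have Epos: "emeasure M E > 0" unfolding E_def by (rule esssup_pos_measure[OF g z(2)])
  define h where "h x = w x * indicator E x" for x
  have h[measurable]: "h \<in> borel_measurable M" unfolding h_def by measurable
  have hfin: "(\<integral>\<^sup>+x. h x \<partial>M) \<noteq> top"
  proof -
    have "(\<integral>\<^sup>+x. h x \<partial>M) \<le> (\<integral>\<^sup>+x. w x \<partial>M)"
      unfolding h_def by (intro nn_integral_mono) (auto simp: indicator_def)
    then show ?thesis using wint by (auto simp: top_unique)
  qed
  have hpos: "(\<integral>\<^sup>+x. h x \<partial>M) \<noteq> 0"
  proof
    assume "(\<integral>\<^sup>+x. h x \<partial>M) = 0"
    then have "AE x in M. h x = 0" by (simp add: nn_integral_0_iff_AE)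
    then have "AE x in M. x \<notin> E"
    proof (rule AE_mp, intro AE_I2 impI)
      fix x assume x: "x \<in> space M" "h x = 0"
      have "w x \<noteq> 0" using wpos[OF x(1)] by (metis less_irrefl)
      then show "x \<notin> E" using x(2) by (auto simp: h_def)
    qed
    then have "emeasure M {x \<in> space M. x \<in> E} = 0"
      by (subst (asm) AE_iff_measurable[OF _ refl]) auto
    moreover have "{x \<in> space M. x \<in> E} = E" using sets.sets_into_space[OF E] by auto
    ultimately show False using Epos by simp
  qed
  have "(\<integral>\<^sup>+x. z * h x \<partial>M) \<le> (\<integral>\<^sup>+x. g x * epow (h x) (1 - q) \<partial>M)"
  proof (intro nn_integral_mono)
    fix x assume "x \<in> space M"
    show "z * h x \<le> g x * epow (h x) (1 - q)"
    proof (cases "x \<in> E")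
      case True
      then have "z \<le> g x" by (simp add: E_def less_imp_le)
      then show ?thesis using True q by (simp add: h_def mult_right_mono)
    next
      case False
      then show ?thesis using q by (simp add: h_def)
    qed
  qed
  also have "\<dots> \<le> ennreal M0 * epow (\<integral>\<^sup>+x. h x \<partial>M) (1 - q)"
    by (rule H[OF h hpos hfin])
  finally have "z * (\<integral>\<^sup>+x. h x \<partial>M) \<le> ennreal M0 * (\<integral>\<^sup>+x. h x \<partial>M)"
    using q by (simp add: nn_integral_cmult)
  moreover obtain j where j: "(\<integral>\<^sup>+x. h x \<partial>M) = ennreal j" "j > 0" using hpos hfin
    by (cases "(\<integral>\<^sup>+x. h x \<partial>M)") (auto simp: less_le)
  ultimately have "ennreal (l * j) \<le> ennreal (M0 * j)"
    using l M0 by (simp add: ennreal_mult)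
  then have "l * j \<le> M0 * j" using M0 j by (simp add: ennreal_le_iff)
  then have "l \<le> M0" using j by simp
  then show False using lM by simp
qed

lemma dual_neg:
  assumes q: "q < 0"
  shows "Lnorm_inv M q g \<le> ennreal M0"
proof -
  define b where "b = 1 - q"
  have b: "b > 1" "q + b = 1" using q by (auto simp: b_def)
  define G where "G x = epow (g x) (1 / q)" for x
  have G[measurable]: "G \<in> borel_measurable M" unfolding G_def by measurable
  define I where "I = (\<integral>\<^sup>+x. G x \<partial>M)"
  have L: "Lnorm_inv M q g = epow I q" using q by (simp add: Lnorm_inv_def I_def G_def)
  show ?thesis
  proof (cases "I = top")
    case True then show ?thesis using L q by simp
  next
    case Ifin: False
    show ?thesis
    proof (cases "I = 0")
      case True
      then have "AE x in M. G x = 0" by (simp add: I_def nn_integral_0_iff_AE)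
      then have gtop: "AE x in M. g x = top"
        by eventually_elim (use q in \<open>simp add: G_def epow_eq_0_iff_neg\<close>)
      have "(\<integral>\<^sup>+x. g x * epow (w x) (1 - q) \<partial>M) = (\<integral>\<^sup>+x. top \<partial>M)"
      proof (intro nn_integral_cong_AE)
        show "AE x in M. g x * epow (w x) (1 - q) = top"
          using gtop
        proof (rule AE_mp, intro AE_I2 impI)
          fix x assume x: "x \<in> space M" "g x = top"
          have "w x \<noteq> 0" using wpos[OF x(1)] by (metis less_irrefl)
          then have "epow (w x) (1 - q) \<noteq> 0" using q by (simp add: epow_eq_0_iff)
          then show "g x * epow (w x) (1 - q) = top" using x(2) by (simp add: ennreal_top_mult)
        qed
      qed
      also have "\<dots> = top" using sp by (simp add: ennreal_top_mult)
      finally have "top \<le> ennreal M0 * epow (\<integral>\<^sup>+x. w x \<partial>M) (1 - q)"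
        using H[OF w wint_pos wint] by simp
      moreover have "epow (\<integral>\<^sup>+x. w x \<partial>M) (1 - q) \<noteq> top"
        using wint q by (simp add: epow_eq_top_iff)
      ultimately show ?thesis by (simp add: top_unique ennreal_mult_eq_top_iff)
    next
      case I0: False
      have AEG: "AE x in M. G x \<noteq> top" using nn_integral_noteq_infinite[OF G] Ifin by (simp add: I_def)
      have "(\<integral>\<^sup>+x. g x * epow (G x) (1 - q) \<partial>M) = I"
        unfolding I_def
      proof (intro nn_integral_cong_AE)
        show "AE x in M. g x * epow (G x) (1 - q) = G x"
          using AEG
        proof (rule AE_mp, intro AE_I2 impI)
          fix x assume x: "x \<in> space M" "G x \<noteq> top"
          then have g0: "g x \<noteq> 0" using q by (auto simp: G_def)
          show "g x * epow (G x) (1 - q) = G x"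
          proof (cases "g x = top")
            case True
            have "1 / q < 0" using q by simp
            moreover have "(1 - q) / q < 0" using q by (intro divide_pos_neg) auto
            ultimately show ?thesis using True by (simp add: G_def epow_epow)
          next
            case False
            then obtain y where y: "g x = ennreal y" "y > 0" using g0
              by (cases "g x") (auto simp: less_le)
            have "y * (y powr (1 / q)) powr (1 - q) = y powr (1 + (1/q) * (1 - q))"
              using y by (simp add: powr_powr powr_add)
            also have "1 + (1/q) * (1 - q) = 1 / q" using q by (simp add: field_simps)
            finally show ?thesis using y by (simp add: G_def epow_real ennreal_mult[symmetric])
          qed
        qed
      qed
      then have "I \<le> ennreal M0 * epow I (1 - q)"
        using H[OF G] I0 Ifin by (simp add: I_def)
      moreover obtain j where j: "I = ennreal j" "j > 0" using I0 Ifin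
        by (cases I) (auto simp: less_le)
      ultimately have "ennreal j \<le> ennreal (M0 * j powr b)"
        using M0 by (simp add: epow_real ennreal_mult b_def)
      then have "j \<le> M0 * j powr b" using M0 by (simp add: ennreal_le_iff)
      then have "j powr q \<le> M0" by (rule real_step[OF j(2) _ b(2)])
      then show ?thesis using L j by (simp add: epow_real ennreal_leI)
    qed
  qed
qed

lemma dual_all:
  assumes "q < 1"
  shows "Lnorm_inv M q g \<le> ennreal M0"
  using dual_pos[OF _ assms] dual_zero dual_neg by (cases "q > 0"; cases "q = 0") auto

end

lemma dual_bound:
  fixes M :: "'a measure" and g :: "'a \<Rightarrow> ennreal"
  assumes sf: "sigma_finite_measure M" and sp: "emeasure M (space M) \<noteq> 0"
    and g[measurable]: "g \<in> borel_measurable M" and q: "q < 1" and M0: "M0 \<ge> 0"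
    and H: "\<And>h. h \<in> borel_measurable M \<Longrightarrow> (\<integral>\<^sup>+x. h x \<partial>M) \<noteq> 0 \<Longrightarrow> (\<integral>\<^sup>+x. h x \<partial>M) \<noteq> top \<Longrightarrow>
             (\<integral>\<^sup>+x. g x * epow (h x) (1 - q) \<partial>M) \<le> ennreal M0 * epow (\<integral>\<^sup>+x. h x \<partial>M) (1 - q)"
  shows "Lnorm_inv M q g \<le> ennreal M0"
proof -
  obtain w where w: "w \<in> borel_measurable M" "integral\<^sup>N M w \<noteq> \<infinity>" "\<forall>x\<in>space M. 0 < w x \<and> w x < \<infinity>"
    using sigma_finite_measure.Ex_finite_integrable_function[OF sf] by blast
  interpret dualctx M g w q M0
    using w sp M0 H by unfold_locales auto
  show ?thesis by (rule dual_all[OF q])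
qed


lemma lebn_sf: "sigma_finite_measure (lebn n)"
proof -
  interpret product_sigma_finite "\<lambda>_. lborel :: real measure" by standard
  show ?thesis unfolding lebn_def by (rule sigma_finite) simp
qed

lemma lebn_sp: "emeasure (lebn n) (space (lebn n)) \<noteq> 0"
proof -
  interpret product_sigma_finite "\<lambda>_. lborel :: real measure" by standard
  have "space (lebn n) = (\<Pi>\<^sub>E i\<in>{..<n}. UNIV)" unfolding lebn_def by (simp add: space_PiM)
  then have "emeasure (lebn n) (space (lebn n)) = (\<Prod>i\<in>{..<n}. emeasure lborel (UNIV :: real set))"
    unfolding lebn_def by (simp add: emeasure_PiM)
  then show ?thesis by simp
qed

lemma matapp_meas[measurable]: "matapp n m M \<in> lebn m \<rightarrow>\<^sub>M lebn n"
  unfolding matapp_def lebn_def by measurable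


lemma ln_prod_pos: fixes a :: "'i \<Rightarrow> real" assumes "finite J" "\<And>j. j \<in> J \<Longrightarrow> a j > 0"
  shows "ln (\<Prod>j\<in>J. a j) = (\<Sum>j\<in>J. ln (a j))"
proof (rule ln_prod[OF assms(1)])
  fix j assume "j \<in> J" then show "a j \<noteq> 0" using assms(2)[of j] by simp
qed

lemma real_id1:
  fixes \<phi> \<tau> \<theta>0 s c0 :: real and \<eta> c bj wt :: "'i \<Rightarrow> real"
  assumes J: "finite J" and pos: "\<phi> > 0" "\<tau> > 0" "\<And>j. j \<in> J \<Longrightarrow> \<eta> j > 0" "\<theta>0 > 0"
    and e1: "\<And>j. j \<in> J \<Longrightarrow> bj j * wt j = - c j * s / \<theta>0"
    and e2: "1 / \<theta>0 + (\<Sum>j\<in>J. wt j) = 1"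
  shows "(\<phi> * (\<tau> powr c0 * (\<Prod>j\<in>J. \<eta> j powr c j)) powr s) powr (1/\<theta>0) * (\<Prod>j\<in>J. (\<phi> * \<eta> j powr bj j) powr wt j)
         = \<phi> * \<tau> powr (c0 * s / \<theta>0)"
proof -
  let ?L = "(\<phi> * (\<tau> powr c0 * (\<Prod>j\<in>J. \<eta> j powr c j)) powr s) powr (1/\<theta>0) * (\<Prod>j\<in>J. (\<phi> * \<eta> j powr bj j) powr wt j)"
  have nz: "\<And>j. j \<in> J \<Longrightarrow> \<eta> j \<noteq> 0" using pos(3) by (metis less_irrefl)
  have p1: "(\<Prod>j\<in>J. \<eta> j powr c j) > 0" using pos by (intro prod_pos) (simp add: nz)
  have p2: "(\<Prod>j\<in>J. (\<phi> * \<eta> j powr bj j) powr wt j) > 0" using pos by (intro prod_pos) (simp add: nz)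
  have Lpos: "?L > 0" using pos p1 p2 by simp
  have "ln ?L = (1/\<theta>0) * (ln \<phi> + s * (c0 * ln \<tau> + (\<Sum>j\<in>J. c j * ln (\<eta> j))))
                + (\<Sum>j\<in>J. wt j * (ln \<phi> + bj j * ln (\<eta> j)))"
    using pos p1 p2 J by (simp add: ln_mult ln_powr ln_prod_pos nz)
  also have "\<dots> = ln \<phi> * (1/\<theta>0 + (\<Sum>j\<in>J. wt j)) + (c0 * s / \<theta>0) * ln \<tau>
                  + (\<Sum>j\<in>J. (s * c j / \<theta>0 + wt j * bj j) * ln (\<eta> j))"
    by (simp add: algebra_simps sum.distrib sum_distrib_left sum_distrib_right sum_divide_distrib)
  also have "(\<Sum>j\<in>J. (s * c j / \<theta>0 + wt j * bj j) * ln (\<eta> j)) = 0"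
    using e1 by (intro sum.neutral) (auto simp: algebra_simps)
  also have "ln \<phi> * (1/\<theta>0 + (\<Sum>j\<in>J. wt j)) + (c0 * s / \<theta>0) * ln \<tau> + 0 = ln (\<phi> * \<tau> powr (c0 * s / \<theta>0))"
    using pos e2 by (simp add: ln_mult ln_powr)
  finally show ?thesis using Lpos pos by (simp add: ln_inj_iff)
qed

lemma real_id2:
  fixes Pr BLr hr \<theta>0 s c0 :: real and Ir c \<theta> :: "'i \<Rightarrow> real"
  assumes J: "finite J" and pos: "Pr > 0" "BLr > 0" "hr > 0" "\<And>j. j \<in> J \<Longrightarrow> Ir j > 0" "\<theta>0 > 0"
  shows "(Pr * (BLr * (hr powr c0 * (\<Prod>j\<in>J. Ir j powr c j))) powr s) powr (1/\<theta>0) * (\<Prod>j\<in>J. Ir j powr (- \<theta> j / \<theta>0))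
         = (Pr * BLr powr s * (\<Prod>j\<in>J. Ir j powr (c j * s - \<theta> j))) powr (1/\<theta>0) * hr powr (c0 * s / \<theta>0)"
proof -
  let ?L = "(Pr * (BLr * (hr powr c0 * (\<Prod>j\<in>J. Ir j powr c j))) powr s) powr (1/\<theta>0) * (\<Prod>j\<in>J. Ir j powr (- \<theta> j / \<theta>0))"
  let ?R = "(Pr * BLr powr s * (\<Prod>j\<in>J. Ir j powr (c j * s - \<theta> j))) powr (1/\<theta>0) * hr powr (c0 * s / \<theta>0)"
  have nz: "\<And>j. j \<in> J \<Longrightarrow> Ir j \<noteq> 0" using pos(4) by (metis less_irrefl)
  have p1: "(\<Prod>j\<in>J. Ir j powr c j) > 0" "(\<Prod>j\<in>J. Ir j powr (- \<theta> j / \<theta>0)) > 0"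
    "(\<Prod>j\<in>J. Ir j powr (c j * s - \<theta> j)) > 0" by (auto intro!: prod_pos simp: nz)
  have Lpos: "?L > 0" "?R > 0" using pos p1 by auto
  have "ln ?L = (1/\<theta>0) * (ln Pr + s * (ln BLr + c0 * ln hr + (\<Sum>j\<in>J. c j * ln (Ir j))))
                + (\<Sum>j\<in>J. (- \<theta> j / \<theta>0) * ln (Ir j))"
    using pos p1 J by (simp add: ln_mult ln_powr ln_prod_pos nz)
  also have "\<dots> = (1/\<theta>0) * (ln Pr + s * ln BLr + (\<Sum>j\<in>J. (c j * s - \<theta> j) * ln (Ir j))) + (c0 * s / \<theta>0) * ln hr"
    by (simp add: algebra_simps sum.distrib sum_distrib_left sum_distrib_right sum_divide_distrib sum_subtractf sum_negf)
  also have "\<dots> = ln ?R"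
    using pos p1 J by (simp add: ln_mult ln_powr ln_prod_pos nz)
  finally show ?thesis using Lpos by (simp add: ln_inj_iff)
qed

lemma real_id3:
  fixes Pr BLr \<theta>0 s :: real and Ir c \<theta> q :: "'i \<Rightarrow> real"
  assumes J: "finite J" and pos: "Pr > 0" "BLr > 0" "\<And>j. j \<in> J \<Longrightarrow> Ir j > 0" "\<theta>0 > 0"
    and e: "\<And>j. j \<in> J \<Longrightarrow> c j * s = \<theta> j * (1 - q j)"
  shows "BLr powr (- s) * ((Pr * BLr powr s * (\<Prod>j\<in>J. Ir j powr (c j * s - \<theta> j))) powr (1/\<theta>0)) powr \<theta>0
           * (\<Prod>j\<in>J. (Ir j powr q j) powr \<theta> j) = Pr"
proof -
  have nz: "\<And>j. j \<in> J \<Longrightarrow> Ir j \<noteq> 0" using pos(3) by (metis less_irrefl)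
  have p1: "(\<Prod>j\<in>J. Ir j powr (c j * s - \<theta> j)) > 0" "(\<Prod>j\<in>J. (Ir j powr q j) powr \<theta> j) > 0"
    by (auto intro!: prod_pos simp: nz)
  have "((Pr * BLr powr s * (\<Prod>j\<in>J. Ir j powr (c j * s - \<theta> j))) powr (1/\<theta>0)) powr \<theta>0
        = Pr * BLr powr s * (\<Prod>j\<in>J. Ir j powr (c j * s - \<theta> j))"
    using pos p1 by (simp add: powr_powr)
  moreover have "(\<Prod>j\<in>J. Ir j powr (c j * s - \<theta> j)) * (\<Prod>j\<in>J. (Ir j powr q j) powr \<theta> j) = 1"
  proof -
    have "(\<Prod>j\<in>J. Ir j powr (c j * s - \<theta> j)) * (\<Prod>j\<in>J. (Ir j powr q j) powr \<theta> j)
        = (\<Prod>j\<in>J. Ir j powr (c j * s - \<theta> j) * (Ir j powr q j) powr \<theta> j)"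
      by (simp add: prod.distrib)
    also have "\<dots> = (\<Prod>j\<in>J. 1)"
    proof (intro prod.cong refl)
      fix j assume j: "j \<in> J"
      have "Ir j powr (c j * s - \<theta> j) * (Ir j powr q j) powr \<theta> j = Ir j powr ((c j * s - \<theta> j) + q j * \<theta> j)"
        using pos(3)[OF j] by (simp add: powr_powr powr_add)
      also have "(c j * s - \<theta> j) + q j * \<theta> j = 0" using e[OF j] by (simp add: algebra_simps)
      finally show "Ir j powr (c j * s - \<theta> j) * (Ir j powr q j) powr \<theta> j = 1" using nz[OF j] by simp
    qed
    finally show ?thesis by simp
  qed
  ultimately show ?thesis using pos
    by (simp add: powr_minus field_simps mult.assoc)
qed


lemma le_Inf_mult:
  fixes X R :: ennreal
  assumes "\<And>C. C \<in> S \<Longrightarrow> X \<le> C * R" "R \<noteq> 0" "R \<noteq> top"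
  shows "X \<le> Inf S * R"
proof -
  have Rp: "R > 0" using assms(2) by (simp add: zero_less_iff_neq_zero)
  have "X / R \<le> Inf S"
  proof (rule Inf_greatest)
    fix C assume "C \<in> S"
    then have "X \<le> R * C" using assms(1) by (simp add: mult.commute)
    then show "X / R \<le> C" by (rule divide_le_posI_ennreal[OF Rp])
  qed
  then have "(X / R) * R \<le> Inf S * R" by (rule mult_right_mono) simp
  moreover have "R / R = 1" using assms(2,3) by (simp add: divide_eq_1_ennreal)
  then have "(X / R) * R = X" by (simp add: ennreal_divide_times)
  ultimately show ?thesis by simp
qed

lemma Lnorm_zero:
  assumes sp: "emeasure M (space M) \<noteq> 0" and g[measurable]: "g \<in> borel_measurable M"
    and z: "AE x in M. g x = 0"
  shows "Lnorm_inv M q g = 0"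
proof -
  consider "q > 0" | "q = 0" | "q < 0" by linarith
  then show ?thesis
  proof cases
    case 1
    have "(\<integral>\<^sup>+x. epow (g x) (1/q) \<partial>M) = (\<integral>\<^sup>+x. 0 \<partial>M)"
      by (intro nn_integral_cong_AE) (use z 1 in \<open>auto elim: AE_mp\<close>)
    then show ?thesis using 1 by (simp add: Lnorm_inv_def)
  next
    case 2
    have "esssup M g \<le> 0" by (rule esssup_I[OF g]) (use z in \<open>auto elim: AE_mp\<close>)
    then show ?thesis using 2 by (simp add: Lnorm_inv_def)
  next
    case 3
    have "(\<integral>\<^sup>+x. epow (g x) (1/q) \<partial>M) = (\<integral>\<^sup>+x. top \<partial>M)"
      by (intro nn_integral_cong_AE) (use z 3 in \<open>auto elim: AE_mp\<close>)
    also have "\<dots> = top" using sp by (simp add: ennreal_top_mult)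
    finally show ?thesis using 3 by (simp add: Lnorm_inv_def)
  qed
qed

lemma pointwise_abs:
  fixes \<phi> t :: ennreal and \<eta> :: "'i \<Rightarrow> ennreal" and c bj wt :: "'i \<Rightarrow> real"
  assumes J: "finite J" and \<phi>: "\<phi> \<noteq> top" and \<eta>: "\<phi> \<noteq> 0 \<Longrightarrow> \<forall>j\<in>J. \<eta> j \<noteq> 0 \<and> \<eta> j \<noteq> top"
    and pos: "\<theta>0 > 0" "s > 0" "c0 > 0"
    and e1: "\<And>j. j \<in> J \<Longrightarrow> bj j * wt j = - c j * s / \<theta>0"
    and e2: "1 / \<theta>0 + (\<Sum>j\<in>J. wt j) = 1"
  shows "\<phi> * epow t (c0 * s / \<theta>0)
         \<le> epow (\<phi> * epow (epow t c0 * (\<Prod>j\<in>J. epow (\<eta> j) (c j))) s) (1 / \<theta>0)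
             * (\<Prod>j\<in>J. epow (\<phi> * epow (\<eta> j) (bj j)) (wt j))"
proof (cases "\<phi> = 0")
  case True then show ?thesis by simp
next
  case False
  obtain a where a: "\<phi> = ennreal a" "a > 0" using False \<phi> by (cases \<phi>) (auto simp: less_le)
  define e where "e j = enn2real (\<eta> j)" for j
  have e: "\<eta> j = ennreal (e j) \<and> e j > 0" if "j \<in> J" for j
    using \<eta>[OF False] that unfolding e_def by (cases "\<eta> j") (auto simp: less_le)
  have enz: "e j \<noteq> 0" "\<eta> j = ennreal (e j)" "e j > 0" if "j \<in> J" for j using e[OF that] by auto
  have prodc: "(\<Prod>j\<in>J. epow (\<eta> j) (c j)) = ennreal (\<Prod>j\<in>J. e j powr c j)"
  proof -
    have "(\<Prod>j\<in>J. epow (\<eta> j) (c j)) = (\<Prod>j\<in>J. ennreal (e j powr c j))"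
      by (intro prod.cong refl) (simp add: epow_real enz)
    also have "\<dots> = ennreal (\<Prod>j\<in>J. e j powr c j)" by (rule prod_ennreal) simp
    finally show ?thesis .
  qed
  have prodw: "(\<Prod>j\<in>J. epow (\<phi> * epow (\<eta> j) (bj j)) (wt j)) = ennreal (\<Prod>j\<in>J. (a * e j powr bj j) powr wt j)"
  proof -
    have "(\<Prod>j\<in>J. epow (\<phi> * epow (\<eta> j) (bj j)) (wt j)) = (\<Prod>j\<in>J. ennreal ((a * e j powr bj j) powr wt j))"
    proof (intro prod.cong refl)
      fix j assume j: "j \<in> J"
      have "\<phi> * epow (\<eta> j) (bj j) = ennreal (a * e j powr bj j)"
        using enz[OF j] a by (simp add: epow_real ennreal_mult)
      moreover have "a * e j powr bj j > 0" using enz[OF j] a by simp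
      ultimately show "epow (\<phi> * epow (\<eta> j) (bj j)) (wt j) = ennreal ((a * e j powr bj j) powr wt j)"
        by (simp add: epow_real)
    qed
    also have "\<dots> = ennreal (\<Prod>j\<in>J. (a * e j powr bj j) powr wt j)" by (rule prod_ennreal) simp
    finally show ?thesis .
  qed
  have pp1: "(\<Prod>j\<in>J. e j powr c j) > 0" by (rule prod_pos) (simp add: enz)
  have pp2: "(\<Prod>j\<in>J. (a * e j powr bj j) powr wt j) > 0" by (rule prod_pos) (use a in \<open>simp add: enz\<close>)
  consider "t = 0" | "t = top" | \<tau> where "t = ennreal \<tau>" "\<tau> > 0"
    by (cases t) (auto simp: less_le)
  then show ?thesis
  proof cases
    case 1
    have "c0 * s / \<theta>0 > 0" using pos by simp
    then show ?thesis using 1 by simp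
  next
    case 2
    have "epow (epow t c0 * (\<Prod>j\<in>J. epow (\<eta> j) (c j))) s = top"
      using 2 pos pp1 prodc by (simp add: ennreal_top_mult)
    then have "epow (\<phi> * epow (epow t c0 * (\<Prod>j\<in>J. epow (\<eta> j) (c j))) s) (1 / \<theta>0) = top"
      using a pos by (simp add: ennreal_mult_top)
    then show ?thesis using prodw pp2 by (simp add: ennreal_top_mult)
  next
    case 3
    have lhs: "\<phi> * epow t (c0 * s / \<theta>0) = ennreal (a * \<tau> powr (c0 * s / \<theta>0))"
      using 3 a by (simp add: epow_real ennreal_mult)
    have in1: "epow t c0 * (\<Prod>j\<in>J. epow (\<eta> j) (c j)) = ennreal (\<tau> powr c0 * (\<Prod>j\<in>J. e j powr c j))"
      using 3 prodc by (simp add: epow_real ennreal_mult prod_nonneg)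
    have in2: "\<phi> * epow (epow t c0 * (\<Prod>j\<in>J. epow (\<eta> j) (c j))) s
               = ennreal (a * (\<tau> powr c0 * (\<Prod>j\<in>J. e j powr c j)) powr s)"
    proof -
      have "epow (ennreal (\<tau> powr c0 * (\<Prod>j\<in>J. e j powr c j))) s = ennreal ((\<tau> powr c0 * (\<Prod>j\<in>J. e j powr c j)) powr s)"
        using 3 pp1 by (intro epow_real) simp
      then show ?thesis unfolding in1 using a by (simp add: ennreal_mult[symmetric])
    qed
    have in3: "epow (\<phi> * epow (epow t c0 * (\<Prod>j\<in>J. epow (\<eta> j) (c j))) s) (1 / \<theta>0)
               = ennreal ((a * (\<tau> powr c0 * (\<Prod>j\<in>J. e j powr c j)) powr s) powr (1 / \<theta>0))"
      unfolding in2 using 3 a pp1 by (simp add: epow_real)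
    have "ennreal ((a * (\<tau> powr c0 * (\<Prod>j\<in>J. e j powr c j)) powr s) powr (1 / \<theta>0)) * ennreal (\<Prod>j\<in>J. (a * e j powr bj j) powr wt j)
          = ennreal ((a * (\<tau> powr c0 * (\<Prod>j\<in>J. e j powr c j)) powr s) powr (1 / \<theta>0) * (\<Prod>j\<in>J. (a * e j powr bj j) powr wt j))"
      by (rule ennreal_mult[symmetric]) (auto intro: prod_nonneg)
    also have "(a * (\<tau> powr c0 * (\<Prod>j\<in>J. e j powr c j)) powr s) powr (1 / \<theta>0) * (\<Prod>j\<in>J. (a * e j powr bj j) powr wt j)
          = a * \<tau> powr (c0 * s / \<theta>0)"
      by (rule real_id1[OF J a(2) 3(2) _ pos(1) e1 e2]) (simp add: enz)
    finally show ?thesis using lhs in3 prodw by simp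
  qed
qed


locale BLsetting =
  fixes d k :: nat and dd :: "nat \<Rightarrow> nat" and B :: "nat \<Rightarrow> nat \<Rightarrow> nat \<Rightarrow> real"
    and c \<theta> :: "nat \<Rightarrow> real" and p :: real and q :: "nat \<Rightarrow> real"
    and f :: "(nat \<Rightarrow> real) \<Rightarrow> ennreal" and g :: "nat \<Rightarrow> (nat \<Rightarrow> real) \<Rightarrow> ennreal"
    and i0 :: nat
  assumes c_pos: "\<forall>i\<in>{1..k}. c i > 0"
    and p_ge: "p \<ge> 1"
    and theta_sum: "(\<Sum>i\<in>{1..k}. \<theta> i) = 1"
    and i0: "i0 \<in> {1..k}" "\<theta> i0 > 0"
    and others: "\<And>i. i \<in> {1..k} \<Longrightarrow> i \<noteq> i0 \<Longrightarrow> \<theta> i < 0"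
    and q_def: "\<forall>i\<in>{1..k}. c i * (1 - 1 / p) = \<theta> i * (1 - q i)"
    and f_meas[measurable]: "f \<in> borel_measurable (lebn d)"
    and g_push: "\<forall>i\<in>{1..k}. is_pushforward d (dd i) (matapp (dd i) d (B i)) f (g i)"
begin

abbreviation "K \<equiv> {1..k}"
abbreviation "J \<equiv> {1..k} - {i0}"
abbreviation "A i \<equiv> matapp (dd i) d (B i)"
abbreviation "N i \<equiv> Lnorm_inv (lebn (dd i)) (q i) (g i)"

lemma g_meas[measurable]: "i \<in> K \<Longrightarrow> g i \<in> borel_measurable (lebn (dd i))"
  using g_push by (auto simp: is_pushforward_def)

lemma push: "i \<in> K \<Longrightarrow> F \<in> borel_measurable (lebn (dd i)) \<Longrightarrow>
   (\<integral>\<^sup>+x. f x * F (A i x) \<partial>lebn d) = (\<integral>\<^sup>+y. g i y * F y \<partial>lebn (dd i))"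
  using g_push by (auto simp: is_pushforward_def)

lemma int_g: "i \<in> K \<Longrightarrow> (\<integral>\<^sup>+y. g i y \<partial>lebn (dd i)) = (\<integral>\<^sup>+x. f x \<partial>lebn d)"
  using push[of i "\<lambda>_. 1"] by simp

lemma J_theta: "j \<in> J \<Longrightarrow> \<theta> j < 0" using others by auto
lemma J_sub: "J \<subseteq> K" by auto
lemma finK: "finite K" by simp
lemma finJ: "finite J" by simp

lemma prod_split: "(\<Prod>i\<in>K. X i) = X i0 * (\<Prod>j\<in>J. X j)"
  using i0(1) by (simp add: prod.remove)

lemma sum_J: "(\<Sum>j\<in>J. \<theta> j) = 1 - \<theta> i0"
  using theta_sum i0(1) by (simp add: sum.remove)

lemma zero_case:
  assumes "(\<integral>\<^sup>+x. f x \<partial>lebn d) = 0"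
  shows "(\<Prod>i\<in>K. epow (N i) (\<theta> i)) = 0"
proof -
  have "(\<integral>\<^sup>+y. g i0 y \<partial>lebn (dd i0)) = 0" using int_g[OF i0(1)] assms by simp
  then have "AE y in lebn (dd i0). g i0 y = 0"
    using g_meas[OF i0(1)] by (simp add: nn_integral_0_iff_AE)
  then have "N i0 = 0" by (rule Lnorm_zero[OF lebn_sp g_meas[OF i0(1)]])
  then have "epow (N i0) (\<theta> i0) = 0" using i0(2) by simp
  then show ?thesis using i0(1) by (auto intro!: bexI[of _ i0])
qed


lemma theta_nz: "i \<in> K \<Longrightarrow> \<theta> i \<noteq> 0"
  using i0 others by (metis less_irrefl)

lemma Lnorm_pos_q: "q' > 0 \<Longrightarrow> Lnorm_inv M q' h = epow (\<integral>\<^sup>+x. epow (h x) (1 / q') \<partial>M) q'"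
  by (simp add: Lnorm_inv_def)

lemma p1_case:
  assumes p1: "p = 1"
  shows "Lnorm_inv (lebn d) (1 / p) f
           \<ge> epow (BL d k dd B c) (1 / p - 1) * (\<Prod>i\<in>K. epow (N i) (\<theta> i))"
proof -
  have q1: "q i = 1" if "i \<in> K" for i
    using q_def that theta_nz[OF that] p1 by auto
  define If where "If = (\<integral>\<^sup>+x. f x \<partial>lebn d)"
  have N: "N i = If" if "i \<in> K" for i
    using q1[OF that] int_g[OF that] by (simp add: Lnorm_inv_def If_def)
  have L: "Lnorm_inv (lebn d) (1 / p) f = If" using p1 by (simp add: Lnorm_inv_def If_def)
  have R: "epow (BL d k dd B c) (1 / p - 1) * (\<Prod>i\<in>K. epow (N i) (\<theta> i)) = (\<Prod>i\<in>K. epow If (\<theta> i))"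
    using p1 N by simp
  consider "If = 0" | "If = top" | y where "If = ennreal y" "y > 0"
    by (cases If) (auto simp: less_le)
  then show ?thesis
  proof cases
    case 1
    then have "(\<Prod>i\<in>K. epow (N i) (\<theta> i)) = 0" by (intro zero_case) (simp add: If_def)
    then show ?thesis by (metis mult_zero_right zero_le)
  next
    case 2 then show ?thesis using L by simp
  next
    case 3
    have "(\<Prod>i\<in>K. epow If (\<theta> i)) = (\<Prod>i\<in>K. ennreal (y powr \<theta> i))"
      using 3 by (simp add: epow_real)
    also have "\<dots> = ennreal (\<Prod>i\<in>K. y powr \<theta> i)" by (rule prod_ennreal) simp
    also have "(\<Prod>i\<in>K. y powr \<theta> i) = y powr (\<Sum>i\<in>K. \<theta> i)" using 3 by (simp add: powr_sum)
    also have "\<dots> = y" using theta_sum 3 by simp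
    finally show ?thesis using R L 3 by simp
  qed
qed

lemma qJ: "p > 1 \<Longrightarrow> j \<in> J \<Longrightarrow> q j > 1"
proof -
  assume p: "p > 1" and j: "j \<in> J"
  have "c j * (1 - 1/p) > 0" using c_pos j p by (auto intro!: mult_pos_pos simp: field_simps)
  then have "\<theta> j * (1 - q j) > 0" using q_def j by auto
  then show "q j > 1" using J_theta[OF j] by (simp add: zero_less_mult_iff)
qed

lemma qi0: "p > 1 \<Longrightarrow> q i0 < 1"
proof -
  assume p: "p > 1"
  have "c i0 * (1 - 1/p) > 0" using c_pos i0 p by (auto intro!: mult_pos_pos simp: field_simps)
  then have "\<theta> i0 * (1 - q i0) > 0" using q_def i0 by auto
  then show "q i0 < 1" using i0(2) by (simp add: zero_less_mult_iff)
qed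

end


lemma AE_fin_of_int:
  assumes "u \<in> borel_measurable M" "(\<integral>\<^sup>+x. u x \<partial>M) \<noteq> top"
  shows "AE x in M. u x \<noteq> top"
  using nn_integral_noteq_infinite[OF assms(1)] assms(2) by simp

context BLsetting
begin

lemma AE_f_fin:
  assumes p: "p > 1" and Pfin: "Lnorm_inv (lebn d) (1 / p) f \<noteq> top"
  shows "AE x in lebn d. f x \<noteq> top"
proof -
  have "Lnorm_inv (lebn d) (1 / p) f = epow (\<integral>\<^sup>+x. epow (f x) p \<partial>lebn d) (1 / p)"
    using p by (simp add: Lnorm_inv_def)
  then have "(\<integral>\<^sup>+x. epow (f x) p \<partial>lebn d) \<noteq> top" using Pfin p by auto
  then have "AE x in lebn d. epow (f x) p \<noteq> top" by (intro AE_fin_of_int) auto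
  then show ?thesis by (rule AE_mp) (use p in \<open>auto simp: epow_eq_top_iff intro!: AE_I2\<close>)
qed

lemma AE_g_nz:
  assumes j: "j \<in> K"
  shows "AE x in lebn d. f x = 0 \<or> g j (A j x) \<noteq> 0"
proof -
  have [measurable]: "g j \<in> borel_measurable (lebn (dd j))" using g_meas[OF j] .
  have "(\<integral>\<^sup>+x. f x * (if g j (A j x) = 0 then 1 else 0) \<partial>lebn d)
        = (\<integral>\<^sup>+y. g j y * (if g j y = 0 then 1 else 0) \<partial>lebn (dd j))"
    by (rule push[OF j]) measurable
  also have "\<dots> = (\<integral>\<^sup>+y. 0 \<partial>lebn (dd j))" by (intro nn_integral_cong) simp
  also have "\<dots> = 0" by simp
  finally have "AE x in lebn d. f x * (if g j (A j x) = 0 then 1 else 0) = 0"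
    by (subst (asm) nn_integral_0_iff_AE) measurable
  then show ?thesis by (rule AE_mp) (auto intro!: AE_I2 split: if_splits)
qed

lemma AE_g_fin:
  assumes j: "j \<in> K" and gfin: "AE y in lebn (dd j). g j y \<noteq> top"
  shows "AE x in lebn d. f x = 0 \<or> g j (A j x) \<noteq> top"
proof -
  have [measurable]: "g j \<in> borel_measurable (lebn (dd j))" using g_meas[OF j] .
  have "(\<integral>\<^sup>+x. f x * (if g j (A j x) = top then 1 else 0) \<partial>lebn d)
        = (\<integral>\<^sup>+y. g j y * (if g j y = top then 1 else 0) \<partial>lebn (dd j))"
    by (rule push[OF j]) measurable
  also have "\<dots> = (\<integral>\<^sup>+y. 0 \<partial>lebn (dd j))"
    by (intro nn_integral_cong_AE) (use gfin in \<open>auto elim!: AE_mp intro!: AE_I2\<close>)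
  also have "\<dots> = 0" by simp
  finally have "AE x in lebn d. f x * (if g j (A j x) = top then 1 else 0) = 0"
    by (subst (asm) nn_integral_0_iff_AE) measurable
  then show ?thesis by (rule AE_mp) (auto intro!: AE_I2 split: if_splits)
qed

lemma int_Phi_J:
  assumes j: "j \<in> K" and qj: "q j > 1" and Ifin: "(\<integral>\<^sup>+y. epow (g j y) (1 / q j) \<partial>lebn (dd j)) \<noteq> top"
  shows "(\<integral>\<^sup>+x. f x * epow (epow (g j (A j x)) (1 / q j)) (1 - q j) \<partial>lebn d)
         = (\<integral>\<^sup>+y. epow (g j y) (1 / q j) \<partial>lebn (dd j))"
proof -
  have [measurable]: "g j \<in> borel_measurable (lebn (dd j))" using g_meas[OF j] .
  have "(\<integral>\<^sup>+x. f x * epow (epow (g j (A j x)) (1 / q j)) (1 - q j) \<partial>lebn d)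
        = (\<integral>\<^sup>+y. g j y * epow (epow (g j y) (1 / q j)) (1 - q j) \<partial>lebn (dd j))"
    by (rule push[OF j]) measurable
  also have "\<dots> = (\<integral>\<^sup>+y. epow (g j y) (1 / q j) \<partial>lebn (dd j))"
  proof (intro nn_integral_cong_AE)
    have "AE y in lebn (dd j). epow (g j y) (1 / q j) \<noteq> top"
        by (intro AE_fin_of_int Ifin) measurable
    then show "AE y in lebn (dd j). g j y * epow (epow (g j y) (1 / q j)) (1 - q j) = epow (g j y) (1 / q j)"
    proof (rule AE_mp, intro AE_I2 impI)
      fix y assume "epow (g j y) (1 / q j) \<noteq> top"
      then have gt: "g j y \<noteq> top" using qj by (auto simp: epow_eq_top_iff)
      have e: "(1 - q j) / q j < 0" using qj by (intro divide_neg_pos) auto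
      show "g j y * epow (epow (g j y) (1 / q j)) (1 - q j) = epow (g j y) (1 / q j)"
      proof (cases "g j y = 0")
        case True
        then show ?thesis using qj e by (simp add: epow_epow)
      next
        case False
        then obtain z where z: "g j y = ennreal z" "z > 0" using gt by (cases "g j y") (auto simp: less_le)
        have "z * (z powr (1 / q j)) powr (1 - q j) = z powr (1 + (1 / q j) * (1 - q j))"
          using z by (simp add: powr_powr powr_add)
        also have "1 + (1 / q j) * (1 - q j) = 1 / q j" using qj by (simp add: field_simps)
        finally show ?thesis using z by (simp add: epow_real ennreal_mult[symmetric])
      qed
    qed
  qed
  finally show ?thesis .
qed


lemma wt_sum:
  "1 / \<theta> i0 + (\<Sum>j\<in>J. - \<theta> j / \<theta> i0) = 1"
proof -
  have "(\<Sum>j\<in>J. - \<theta> j / \<theta> i0) = - (\<Sum>j\<in>J. \<theta> j) / \<theta> i0"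
    by (simp add: sum_negf sum_divide_distrib)
  also have "\<dots> = - (1 - \<theta> i0) / \<theta> i0" using sum_J by simp
  finally show ?thesis using i0(2) by (simp add: field_simps)
qed

lemma core_enn:
  assumes p: "p > 1"
    and Pfin: "Lnorm_inv (lebn d) (1 / p) f \<noteq> top"
    and Ifin: "\<And>j. j \<in> J \<Longrightarrow> (\<integral>\<^sup>+y. epow (g j y) (1 / q j) \<partial>lebn (dd j)) \<noteq> top"
    and Ipos: "\<And>j. j \<in> J \<Longrightarrow> (\<integral>\<^sup>+y. epow (g j y) (1 / q j) \<partial>lebn (dd j)) \<noteq> 0"
    and h[measurable]: "h \<in> borel_measurable (lebn (dd i0))"
    and hpos: "(\<integral>\<^sup>+y. h y \<partial>lebn (dd i0)) \<noteq> 0" and hfin: "(\<integral>\<^sup>+y. h y \<partial>lebn (dd i0)) \<noteq> top"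
  shows "(\<integral>\<^sup>+y. g i0 y * epow (h y) (1 - q i0) \<partial>lebn (dd i0))
         \<le> epow (Lnorm_inv (lebn d) (1 / p) f * epow (BL d k dd B c *
                (epow (\<integral>\<^sup>+y. h y \<partial>lebn (dd i0)) (c i0) *
                 (\<Prod>j\<in>J. epow (\<integral>\<^sup>+y. epow (g j y) (1 / q j) \<partial>lebn (dd j)) (c j)))) (1 - 1/p)) (1 / \<theta> i0)
           * (\<Prod>j\<in>J. epow (\<integral>\<^sup>+y. epow (g j y) (1 / q j) \<partial>lebn (dd j)) (- \<theta> j / \<theta> i0))"
proof -
  define s where "s = 1 - 1/p"
  have s: "s > 0" "s < 1" using p by (auto simp: s_def)
  define \<theta>0 where "\<theta>0 = \<theta> i0"
  have \<theta>0: "\<theta>0 > 0" using i0 by (simp add: \<theta>0_def)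
  define P where "P = Lnorm_inv (lebn d) (1 / p) f"
  define I where "I j = (\<integral>\<^sup>+y. epow (g j y) (1 / q j) \<partial>lebn (dd j))" for j
  define hh where "hh i = (if i = i0 then h else (\<lambda>y. epow (g i y) (1 / q i)))" for i
  define H where "H i x = hh i (A i x)" for i x
  define F where "F x = (\<Prod>i\<in>K. epow (H i x) (c i))" for x
  define wt where "wt i = (if i = i0 then 1 / \<theta>0 else - \<theta> i / \<theta>0)" for i
  define Phi where "Phi i x = (if i = i0 then f x * epow (F x) s else f x * epow (H i x) (1 - q i))" for i x
  define R where "R = (\<Prod>i\<in>K. epow (\<integral>\<^sup>+y. hh i y \<partial>lebn (dd i)) (c i))"
  have hh_meas: "hh i \<in> borel_measurable (lebn (dd i))" if "i \<in> K" for i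
    using that g_meas[OF that] unfolding hh_def by auto
  have H_meas: "H i \<in> borel_measurable (lebn d)" if "i \<in> K" for i
    unfolding H_def by (rule measurable_compose[OF matapp_meas hh_meas[OF that]])
  have F_meas[measurable]: "F \<in> borel_measurable (lebn d)"
    unfolding F_def by (intro borel_measurable_prod_ennreal borel_measurable_epow H_meas)
  have Phi_meas: "Phi i \<in> borel_measurable (lebn d)" if "i \<in> K" for i
    unfolding Phi_def using H_meas[OF that] by auto
  have R_split: "R = epow (\<integral>\<^sup>+y. h y \<partial>lebn (dd i0)) (c i0) * (\<Prod>j\<in>J. epow (I j) (c j))"
    unfolding R_def prod_split by (simp add: hh_def I_def)
  have hh_int: "(\<integral>\<^sup>+y. hh i y \<partial>lebn (dd i)) \<noteq> 0 \<and> (\<integral>\<^sup>+y. hh i y \<partial>lebn (dd i)) \<noteq> top" if "i \<in> K" for i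
    using that hpos hfin Ipos Ifin by (cases "i = i0") (auto simp: hh_def)
  have R_nz: "R \<noteq> 0"
    unfolding R_def using hh_int c_pos by (auto simp: epow_eq_0_iff)
  have R_fin: "R \<noteq> top"
    unfolding R_def using hh_int c_pos by (auto simp: ennreal_prod_eq_top epow_eq_top_iff)
  have S1: "(\<integral>\<^sup>+x. F x \<partial>lebn d) \<le> BL d k dd B c * R"
    unfolding BL_def
  proof (rule le_Inf_mult[OF _ R_nz R_fin])
    fix C assume "C \<in> {C. \<forall>f. (\<forall>i\<in>{1..k}. f i \<in> borel_measurable (lebn (dd i))
                               \<and> (\<integral>\<^sup>+ y. f i y \<partial>lebn (dd i)) < \<infinity>) \<longrightarrow>
        (\<integral>\<^sup>+ x. (\<Prod>i\<in>{1..k}. epow (f i (matapp (dd i) d (B i) x)) (c i)) \<partial>lebn d)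
          \<le> C * (\<Prod>i\<in>{1..k}. epow (\<integral>\<^sup>+ y. f i y \<partial>lebn (dd i)) (c i))}"
    then have imp: "(\<forall>i\<in>{1..k}. hh i \<in> borel_measurable (lebn (dd i))
                               \<and> (\<integral>\<^sup>+ y. hh i y \<partial>lebn (dd i)) < \<infinity>) \<longrightarrow>
        (\<integral>\<^sup>+ x. (\<Prod>i\<in>{1..k}. epow (hh i (matapp (dd i) d (B i) x)) (c i)) \<partial>lebn d)
          \<le> C * (\<Prod>i\<in>{1..k}. epow (\<integral>\<^sup>+ y. hh i y \<partial>lebn (dd i)) (c i))" by blast
    have "\<forall>i\<in>{1..k}. hh i \<in> borel_measurable (lebn (dd i)) \<and> (\<integral>\<^sup>+ y. hh i y \<partial>lebn (dd i)) < \<infinity>"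
      using hh_meas hh_int by (auto simp: less_top)
    with imp show "(\<integral>\<^sup>+x. F x \<partial>lebn d) \<le> C * R"
      unfolding F_def H_def R_def by blast
  qed
  have S2: "(\<integral>\<^sup>+x. f x * epow (F x) s \<partial>lebn d) \<le> P * epow (\<integral>\<^sup>+x. F x \<partial>lebn d) s"
  proof -
    define G where "G b = (if b then (\<lambda>x. epow (f x) p) else F)" for b
    define w where "w b = (if b then 1 / p else s)" for b
    have "(\<integral>\<^sup>+x. (\<Prod>b\<in>UNIV. epow (G b x) (w b)) \<partial>lebn d) \<le> (\<Prod>b\<in>UNIV. epow (\<integral>\<^sup>+x. G b x \<partial>lebn d) (w b))"
    proof (rule holder_multi)
      show "\<And>b. b \<in> UNIV \<Longrightarrow> G b \<in> borel_measurable (lebn d)" by (auto simp: G_def)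
      show "\<And>b. b \<in> UNIV \<Longrightarrow> 0 \<le> w b" using s p by (auto simp: w_def)
      show "(\<Sum>b\<in>UNIV. w b) = 1" by (simp add: UNIV_bool w_def s_def)
    qed simp
    moreover have "(\<Prod>b\<in>UNIV. epow (G b x) (w b)) = f x * epow (F x) s" for x
      using p by (simp add: UNIV_bool G_def w_def epow_epow mult.commute)
    moreover have "(\<Prod>b\<in>UNIV. epow (\<integral>\<^sup>+x. G b x \<partial>lebn d) (w b)) = P * epow (\<integral>\<^sup>+x. F x \<partial>lebn d) s"
      using p by (simp add: UNIV_bool G_def w_def P_def Lnorm_inv_def mult.commute)
    ultimately show ?thesis by simp
  qed
  have S3: "(\<integral>\<^sup>+x. f x * epow (H i0 x) (1 - q i0) \<partial>lebn d) \<le> (\<Prod>i\<in>K. epow (\<integral>\<^sup>+x. Phi i x \<partial>lebn d) (wt i))"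
  proof -
    have wsum: "(\<Sum>i\<in>K. wt i) = 1"
    proof -
      have "(\<Sum>i\<in>K. wt i) = wt i0 + (\<Sum>j\<in>J. wt j)" using i0(1) by (simp add: sum.remove)
      also have "(\<Sum>j\<in>J. wt j) = (\<Sum>j\<in>J. - \<theta> j / \<theta> i0)" by (intro sum.cong) (auto simp: wt_def \<theta>0_def)
      finally show ?thesis using wt_sum by (simp add: wt_def \<theta>0_def)
    qed
    have wnn: "0 \<le> wt i" if "i \<in> K" for i
      using that \<theta>0 J_theta[of i] by (cases "i = i0") (auto simp: wt_def divide_nonneg_pos divide_nonpos_pos less_imp_le)
    have HOL: "(\<integral>\<^sup>+x. (\<Prod>i\<in>K. epow (Phi i x) (wt i)) \<partial>lebn d) \<le> (\<Prod>i\<in>K. epow (\<integral>\<^sup>+x. Phi i x \<partial>lebn d) (wt i))"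
      by (rule holder_multi[OF finK Phi_meas wnn wsum])
    have AEg: "AE x in lebn d. \<forall>j\<in>J. f x = 0 \<or> (g j (A j x) \<noteq> 0 \<and> g j (A j x) \<noteq> top)"
    proof (rule AE_finite_allI[OF finJ])
      fix j assume j: "j \<in> J"
      then have jK: "j \<in> K" and qj: "q j > 1" using qJ[OF p] by auto
      have "AE y in lebn (dd j). epow (g j y) (1 / q j) \<noteq> top"
        using g_meas[OF jK] Ifin[OF j] by (intro AE_fin_of_int) auto
      then have gfin: "AE y in lebn (dd j). g j y \<noteq> top"
        by (rule AE_mp) (use qj in \<open>auto simp: epow_eq_top_iff intro!: AE_I2\<close>)
      show "AE x in lebn d. f x = 0 \<or> (g j (A j x) \<noteq> 0 \<and> g j (A j x) \<noteq> top)"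
        using AE_g_nz[OF jK] AE_g_fin[OF jK gfin] by eventually_elim auto
    qed
    have "AE x in lebn d. f x * epow (H i0 x) (1 - q i0) \<le> (\<Prod>i\<in>K. epow (Phi i x) (wt i))"
      using AE_f_fin[OF p Pfin] AEg
    proof eventually_elim
      case (elim x)
      have e0: "c i0 * s / \<theta>0 = 1 - q i0" using q_def i0 \<theta>0 by (auto simp: s_def \<theta>0_def field_simps)
      have pw: "f x * epow (H i0 x) (c i0 * s / \<theta>0)
         \<le> epow (f x * epow (epow (H i0 x) (c i0) * (\<Prod>j\<in>J. epow (H j x) (c j))) s) (1 / \<theta>0)
             * (\<Prod>j\<in>J. epow (f x * epow (H j x) (1 - q j)) (- \<theta> j / \<theta>0))"
      proof (rule pointwise_abs[OF finJ elim(1) _ \<theta>0 s(1)])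
        show "f x \<noteq> 0 \<Longrightarrow> \<forall>j\<in>J. H j x \<noteq> 0 \<and> H j x \<noteq> top"
        proof (intro ballI)
          fix j assume fx: "f x \<noteq> 0" and j: "j \<in> J"
          then have qj: "1 / q j > 0" using qJ[OF p j] by simp
          have "g j (A j x) \<noteq> 0 \<and> g j (A j x) \<noteq> top" using elim(2) fx j by auto
          then show "H j x \<noteq> 0 \<and> H j x \<noteq> top" using j qj
            by (simp add: H_def hh_def epow_eq_0_iff epow_eq_top_iff)
        qed
        show "0 < c i0" using c_pos i0 by auto
        show "(1 - q j) * (- \<theta> j / \<theta>0) = - c j * s / \<theta>0" if j: "j \<in> J" for j
        proof -
          have e: "c j * s = \<theta> j * (1 - q j)" using q_def j by (auto simp: s_def)
          have "(1 - q j) * (- \<theta> j / \<theta>0) = - (\<theta> j * (1 - q j)) / \<theta>0" using \<theta>0 by (simp add: field_simps)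
          also have "\<dots> = - (c j * s) / \<theta>0" using e by simp
          finally show ?thesis by simp
        qed
        show "1 / \<theta>0 + (\<Sum>j\<in>J. - \<theta> j / \<theta>0) = 1" using wt_sum by (simp add: \<theta>0_def)
      qed
      have rhs: "(\<Prod>i\<in>K. epow (Phi i x) (wt i))
          = epow (f x * epow (epow (H i0 x) (c i0) * (\<Prod>j\<in>J. epow (H j x) (c j))) s) (1 / \<theta>0)
             * (\<Prod>j\<in>J. epow (f x * epow (H j x) (1 - q j)) (- \<theta> j / \<theta>0))"
      proof -
        have a: "(\<Prod>j\<in>J. epow (Phi j x) (wt j)) = (\<Prod>j\<in>J. epow (f x * epow (H j x) (1 - q j)) (- \<theta> j / \<theta>0))"
          by (intro prod.cong refl) (simp add: Phi_def wt_def)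
        have Fs: "F x = epow (H i0 x) (c i0) * (\<Prod>j\<in>J. epow (H j x) (c j))"
          unfolding F_def by (rule prod_split)
        show ?thesis unfolding prod_split a by (simp add: Phi_def wt_def Fs)
      qed
      show ?case using pw unfolding rhs e0 .
    qed
    then have "(\<integral>\<^sup>+x. f x * epow (H i0 x) (1 - q i0) \<partial>lebn d) \<le> (\<integral>\<^sup>+x. (\<Prod>i\<in>K. epow (Phi i x) (wt i)) \<partial>lebn d)"
      by (rule nn_integral_mono_AE)
    then show ?thesis using HOL by (rule order_trans)
  qed
  have S4a: "(\<integral>\<^sup>+x. f x * epow (H i0 x) (1 - q i0) \<partial>lebn d) = (\<integral>\<^sup>+y. g i0 y * epow (h y) (1 - q i0) \<partial>lebn (dd i0))"
    unfolding H_def hh_def by (simp, rule push[OF i0(1)]) measurable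
  have S4b: "(\<integral>\<^sup>+x. Phi j x \<partial>lebn d) = I j" if j: "j \<in> J" for j
  proof -
    have "(\<integral>\<^sup>+x. Phi j x \<partial>lebn d) = (\<integral>\<^sup>+x. f x * epow (epow (g j (A j x)) (1 / q j)) (1 - q j) \<partial>lebn d)"
      using j by (simp add: Phi_def H_def hh_def)
    also have "\<dots> = I j" unfolding I_def
      by (rule int_Phi_J) (use j qJ[OF p] Ifin in auto)
    finally show ?thesis .
  qed
  have "(\<integral>\<^sup>+y. g i0 y * epow (h y) (1 - q i0) \<partial>lebn (dd i0))
        \<le> (\<Prod>i\<in>K. epow (\<integral>\<^sup>+x. Phi i x \<partial>lebn d) (wt i))"
    using S3 S4a by simp
  also have "\<dots> = epow (\<integral>\<^sup>+x. f x * epow (F x) s \<partial>lebn d) (1 / \<theta>0) * (\<Prod>j\<in>J. epow (I j) (- \<theta> j / \<theta>0))"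
  proof -
    have a: "(\<integral>\<^sup>+x. Phi i0 x \<partial>lebn d) = (\<integral>\<^sup>+x. f x * epow (F x) s \<partial>lebn d)" by (simp add: Phi_def)
    have b: "(\<Prod>j\<in>J. epow (\<integral>\<^sup>+x. Phi j x \<partial>lebn d) (wt j)) = (\<Prod>j\<in>J. epow (I j) (- \<theta> j / \<theta>0))"
      by (intro prod.cong refl) (simp add: wt_def S4b)
    show ?thesis unfolding prod_split a b by (simp add: wt_def)
  qed
  also have "\<dots> \<le> epow (P * epow (BL d k dd B c * R) s) (1 / \<theta>0) * (\<Prod>j\<in>J. epow (I j) (- \<theta> j / \<theta>0))"
  proof (intro mult_right_mono epow_mono)
    show "(\<integral>\<^sup>+x. f x * epow (F x) s \<partial>lebn d) \<le> P * epow (BL d k dd B c * R) s"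
      using S2 by (rule order_trans) (intro mult_left_mono epow_mono S1, use s in auto)
  qed (use \<theta>0 in auto)
  finally show ?thesis
    unfolding R_split by (simp add: P_def I_def s_def \<theta>0_def)
qed


lemma main_case:
  assumes p: "p > 1"
    and Pfin: "Lnorm_inv (lebn d) (1 / p) f \<noteq> top" and Ppos: "Lnorm_inv (lebn d) (1 / p) f \<noteq> 0"
    and BLfin: "BL d k dd B c \<noteq> top"
    and NJ: "\<And>j. j \<in> J \<Longrightarrow> N j \<noteq> 0 \<and> N j \<noteq> top"
  shows "Lnorm_inv (lebn d) (1 / p) f
           \<ge> epow (BL d k dd B c) (1 / p - 1) * (\<Prod>i\<in>K. epow (N i) (\<theta> i))"
proof -
  define s where "s = 1 - 1/p"
  have s: "s > 0" "s < 1" using p by (auto simp: s_def)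
  define \<theta>0 where "\<theta>0 = \<theta> i0"
  have \<theta>0: "\<theta>0 > 0" using i0 by (simp add: \<theta>0_def)
  define P where "P = Lnorm_inv (lebn d) (1 / p) f"
  obtain Pr where Pr: "P = ennreal Pr" "Pr > 0" using Pfin Ppos unfolding P_def[symmetric]
    by (cases P) (auto simp: less_le)
  obtain BLr where BLr: "BL d k dd B c = ennreal BLr" "BLr \<ge> 0" using BLfin by (cases "BL d k dd B c") auto
  define I where "I j = (\<integral>\<^sup>+y. epow (g j y) (1 / q j) \<partial>lebn (dd j))" for j
  have NI: "N j = epow (I j) (q j)" if "j \<in> J" for j
    unfolding I_def by (rule Lnorm_pos_q) (use qJ[OF p that] in simp)
  have Ipos: "I j \<noteq> 0 \<and> I j \<noteq> top" if j: "j \<in> J" for j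
  proof -
    have qj: "q j > 0" using qJ[OF p j] by simp
    show ?thesis using NJ[OF j] NI[OF j] qj by auto
  qed
  define Ir where "Ir j = enn2real (I j)" for j
  have Ir: "I j = ennreal (Ir j) \<and> Ir j > 0" if "j \<in> J" for j
    using Ipos[OF that] unfolding Ir_def by (cases "I j") (auto simp: less_le)
  have Irpos: "Ir j > 0" if "j \<in> J" for j using Ir[OF that] by simp
  have Irnz: "Ir j \<noteq> 0" if "j \<in> J" for j using Irpos[OF that] by simp
  define M0 where "M0 = (Pr * BLr powr s * (\<Prod>j\<in>J. Ir j powr (c j * s - \<theta> j))) powr (1 / \<theta>0)"
  have M0nn: "M0 \<ge> 0" by (simp add: M0_def)
  have e0: "c i0 * s / \<theta>0 = 1 - q i0" using q_def i0 \<theta>0 by (auto simp: s_def \<theta>0_def field_simps)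
  have bound: "N i0 \<le> ennreal M0"
  proof (rule dual_bound[OF lebn_sf lebn_sp g_meas[OF i0(1)] qi0[OF p] M0nn])
    fix h assume h: "h \<in> borel_measurable (lebn (dd i0))" and hpos: "(\<integral>\<^sup>+x. h x \<partial>lebn (dd i0)) \<noteq> 0"
      and hfin: "(\<integral>\<^sup>+x. h x \<partial>lebn (dd i0)) \<noteq> top"
    define hI where "hI = (\<integral>\<^sup>+x. h x \<partial>lebn (dd i0))"
    obtain hr where hr: "hI = ennreal hr" "hr > 0" using hpos hfin unfolding hI_def[symmetric]
      by (cases hI) (auto simp: less_le)
    have core: "(\<integral>\<^sup>+y. g i0 y * epow (h y) (1 - q i0) \<partial>lebn (dd i0))
         \<le> epow (P * epow (BL d k dd B c * (epow hI (c i0) * (\<Prod>j\<in>J. epow (I j) (c j)))) s) (1 / \<theta>0)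
           * (\<Prod>j\<in>J. epow (I j) (- \<theta> j / \<theta>0))"
      using core_enn[OF p Pfin _ _ h hpos hfin] Ipos unfolding P_def I_def hI_def s_def \<theta>0_def by blast
    show "(\<integral>\<^sup>+y. g i0 y * epow (h y) (1 - q i0) \<partial>lebn (dd i0)) \<le> ennreal M0 * epow hI (1 - q i0)"
    proof (cases "BLr = 0")
      case True
      then have "epow (P * epow (BL d k dd B c * (epow hI (c i0) * (\<Prod>j\<in>J. epow (I j) (c j)))) s) (1 / \<theta>0) = 0"
        using BLr s \<theta>0 by simp
      then show ?thesis using core by simp
    next
      case False
      then have BLp: "BLr > 0" using BLr by simp
      have pc: "(\<Prod>j\<in>J. epow (I j) (c j)) = ennreal (\<Prod>j\<in>J. Ir j powr c j)"
      proof -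
        have "(\<Prod>j\<in>J. epow (I j) (c j)) = (\<Prod>j\<in>J. ennreal (Ir j powr c j))"
          by (intro prod.cong refl) (use Ir in \<open>simp add: epow_real\<close>)
        also have "\<dots> = ennreal (\<Prod>j\<in>J. Ir j powr c j)" by (rule prod_ennreal) simp
        finally show ?thesis .
      qed
      have pw: "(\<Prod>j\<in>J. epow (I j) (- \<theta> j / \<theta>0)) = ennreal (\<Prod>j\<in>J. Ir j powr (- \<theta> j / \<theta>0))"
      proof -
        have "(\<Prod>j\<in>J. epow (I j) (- \<theta> j / \<theta>0)) = (\<Prod>j\<in>J. ennreal (Ir j powr (- \<theta> j / \<theta>0)))"
          by (intro prod.cong refl) (use Ir in \<open>simp add: epow_real\<close>)
        also have "\<dots> = ennreal (\<Prod>j\<in>J. Ir j powr (- \<theta> j / \<theta>0))" by (rule prod_ennreal) simp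
        finally show ?thesis .
      qed
      have pcpos: "(\<Prod>j\<in>J. Ir j powr c j) > 0" by (rule prod_pos) (simp add: Irnz)
      have x1: "epow hI (c i0) * (\<Prod>j\<in>J. epow (I j) (c j)) = ennreal (hr powr c i0 * (\<Prod>j\<in>J. Ir j powr c j))"
        using hr pc pcpos by (simp add: epow_real ennreal_mult prod_nonneg)
      have x2: "BL d k dd B c * (epow hI (c i0) * (\<Prod>j\<in>J. epow (I j) (c j)))
                = ennreal (BLr * (hr powr c i0 * (\<Prod>j\<in>J. Ir j powr c j)))"
        unfolding x1 BLr(1) using BLr pcpos by (simp add: ennreal_mult[symmetric])
      have pos2: "BLr * (hr powr c i0 * (\<Prod>j\<in>J. Ir j powr c j)) > 0" using BLp hr pcpos by simp
      have x3: "P * epow (BL d k dd B c * (epow hI (c i0) * (\<Prod>j\<in>J. epow (I j) (c j)))) s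
                = ennreal (Pr * (BLr * (hr powr c i0 * (\<Prod>j\<in>J. Ir j powr c j))) powr s)"
        unfolding x2 Pr(1) using pos2 Pr by (simp add: epow_real ennreal_mult[symmetric])
      have "(BLr * (hr powr c i0 * (\<Prod>j\<in>J. Ir j powr c j))) powr s > 0"
        using pos2 by (metis powr_gt_zero less_irrefl)
      then have pos3: "Pr * (BLr * (hr powr c i0 * (\<Prod>j\<in>J. Ir j powr c j))) powr s > 0"
        using Pr(2) by (rule mult_pos_pos[rotated])
      have x4: "epow (P * epow (BL d k dd B c * (epow hI (c i0) * (\<Prod>j\<in>J. epow (I j) (c j)))) s) (1 / \<theta>0)
                * (\<Prod>j\<in>J. epow (I j) (- \<theta> j / \<theta>0))
                = ennreal ((Pr * (BLr * (hr powr c i0 * (\<Prod>j\<in>J. Ir j powr c j))) powr s) powr (1 / \<theta>0)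
                   * (\<Prod>j\<in>J. Ir j powr (- \<theta> j / \<theta>0)))"
        unfolding x3 pw using pos3 by (simp add: epow_real ennreal_mult[symmetric] prod_nonneg)
      also have "(Pr * (BLr * (hr powr c i0 * (\<Prod>j\<in>J. Ir j powr c j))) powr s) powr (1 / \<theta>0)
                   * (\<Prod>j\<in>J. Ir j powr (- \<theta> j / \<theta>0))
               = M0 * hr powr (c i0 * s / \<theta>0)"
        unfolding M0_def by (rule real_id2[OF finJ Pr(2) BLp hr(2) Irpos \<theta>0])
      also have "ennreal (M0 * hr powr (c i0 * s / \<theta>0)) = ennreal M0 * epow hI (1 - q i0)"
        using hr M0nn e0 by (simp add: epow_real ennreal_mult)
      finally show ?thesis using core by simp
    qed
  qed
  show ?thesis
  proof (cases "BLr = 0")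
    case True
    then have "M0 = 0" using s by (simp add: M0_def)
    then have "N i0 = 0" using bound by simp
    then have "epow (N i0) (\<theta> i0) = 0" using i0 by simp
    then have "(\<Prod>i\<in>K. epow (N i) (\<theta> i)) = 0" using i0(1) by (auto intro!: bexI[of _ i0])
    then show ?thesis by (metis mult_zero_right zero_le)
  next
    case False
    then have BLp: "BLr > 0" using BLr by simp
    have pq: "(\<Prod>j\<in>J. Ir j powr (c j * s - \<theta> j)) > 0" by (rule prod_pos) (simp add: Irnz)
    have X: "Pr * BLr powr s * (\<Prod>j\<in>J. Ir j powr (c j * s - \<theta> j)) > 0"
      using Pr(2) BLp pq by (intro mult_pos_pos) auto
    then have M0p: "M0 > 0" unfolding M0_def by (metis powr_gt_zero less_irrefl)
    have y1: "epow (BL d k dd B c) (1 / p - 1) = ennreal (BLr powr (- s))"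
      using BLp BLr by (simp add: epow_real s_def)
    have y2: "epow (N i0) (\<theta> i0) \<le> ennreal (M0 powr \<theta>0)"
    proof -
      have "epow (N i0) (\<theta> i0) \<le> epow (ennreal M0) (\<theta> i0)" by (rule epow_mono) (use i0 bound in auto)
      then show ?thesis using M0p by (simp add: epow_real \<theta>0_def)
    qed
    have y3: "(\<Prod>j\<in>J. epow (N j) (\<theta> j)) = ennreal (\<Prod>j\<in>J. (Ir j powr q j) powr \<theta> j)"
    proof -
      have "(\<Prod>j\<in>J. epow (N j) (\<theta> j)) = (\<Prod>j\<in>J. ennreal ((Ir j powr q j) powr \<theta> j))"
      proof (intro prod.cong refl)
        fix j assume j: "j \<in> J"
        have "N j = ennreal (Ir j powr q j)" using NI[OF j] Ir[OF j] by (simp add: epow_real)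
        then show "epow (N j) (\<theta> j) = ennreal ((Ir j powr q j) powr \<theta> j)"
          using Irpos[OF j] by (simp add: epow_real)
      qed
      also have "\<dots> = ennreal (\<Prod>j\<in>J. (Ir j powr q j) powr \<theta> j)" by (rule prod_ennreal) simp
      finally show ?thesis .
    qed
    have "epow (BL d k dd B c) (1 / p - 1) * (\<Prod>i\<in>K. epow (N i) (\<theta> i))
          = ennreal (BLr powr (- s)) * (epow (N i0) (\<theta> i0) * ennreal (\<Prod>j\<in>J. (Ir j powr q j) powr \<theta> j))"
      unfolding prod_split y1 y3 ..
    also have "\<dots> \<le> ennreal (BLr powr (- s)) * (ennreal (M0 powr \<theta>0) * ennreal (\<Prod>j\<in>J. (Ir j powr q j) powr \<theta> j))"
      by (intro mult_left_mono mult_right_mono y2) auto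
    also have "\<dots> = ennreal (BLr powr (- s) * M0 powr \<theta>0 * (\<Prod>j\<in>J. (Ir j powr q j) powr \<theta> j))"
      by (simp add: ennreal_mult prod_nonneg mult.assoc)
    also have "BLr powr (- s) * M0 powr \<theta>0 * (\<Prod>j\<in>J. (Ir j powr q j) powr \<theta> j) = Pr"
      unfolding M0_def
    proof (rule real_id3[OF finJ Pr(2) BLp Irpos \<theta>0])
      show "\<And>j. j \<in> J \<Longrightarrow> c j * s = \<theta> j * (1 - q j)" using q_def by (auto simp: s_def)
    qed
    finally show ?thesis using Pr by (simp add: P_def)
  qed
qed

lemma result:
  shows "Lnorm_inv (lebn d) (1 / p) f
           \<ge> epow (BL d k dd B c) (1 / p - 1) * (\<Prod>i\<in>K. epow (N i) (\<theta> i))"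
proof (cases "p = 1")
  case True then show ?thesis by (rule p1_case)
next
  case False
  then have p: "p > 1" using p_ge by simp
  define P where "P = Lnorm_inv (lebn d) (1 / p) f"
  have P: "P = epow (\<integral>\<^sup>+x. epow (f x) p \<partial>lebn d) (1 / p)"
    using p by (simp add: P_def Lnorm_inv_def)
  have zero_f: "(\<integral>\<^sup>+x. f x \<partial>lebn d) = 0 \<Longrightarrow> ?thesis"
    using zero_case by (metis mult_zero_right zero_le)
  show ?thesis
  proof (cases "P = top")
    case True then show ?thesis by (simp add: P_def)
  next
    case Pfin: False
    show ?thesis
    proof (cases "BL d k dd B c = top")
      case True
      have "1 / p - 1 < 0" using p by simp
      then show ?thesis using True by simp
    next
      case BLfin: False
      show ?thesis
      proof (cases "\<exists>j\<in>J. N j = top")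
        case True
        then obtain j where j: "j \<in> J" "N j = top" by blast
        have "epow (N j) (\<theta> j) = 0" using j J_theta[OF j(1)] by simp
        then have "(\<Prod>i\<in>K. epow (N i) (\<theta> i)) = 0" using j by (auto intro!: bexI[of _ j])
        then show ?thesis by (metis mult_zero_right zero_le)
      next
        case NJfin: False
        show ?thesis
        proof (cases "P = 0")
          case True
          then have "(\<integral>\<^sup>+x. epow (f x) p \<partial>lebn d) = 0" using P p by (simp add: epow_eq_0_iff)
          then have "AE x in lebn d. epow (f x) p = 0" by (simp add: nn_integral_0_iff_AE)
          then have "AE x in lebn d. f x = 0" by (rule AE_mp) (use p in \<open>auto simp: epow_eq_0_iff\<close>)
          then have "(\<integral>\<^sup>+x. f x \<partial>lebn d) = 0" by (simp add: nn_integral_0_iff_AE)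
          then show ?thesis by (rule zero_f)
        next
          case Ppos: False
          show ?thesis
          proof (cases "\<exists>j\<in>J. N j = 0")
            case True
            then obtain j where j: "j \<in> J" "N j = 0" by blast
            have qj: "q j > 0" using qJ[OF p j(1)] by simp
            have jK: "j \<in> K" using j by auto
            have "N j = epow (\<integral>\<^sup>+y. epow (g j y) (1 / q j) \<partial>lebn (dd j)) (q j)"
              by (rule Lnorm_pos_q[OF qj])
            then have "epow (\<integral>\<^sup>+y. epow (g j y) (1 / q j) \<partial>lebn (dd j)) (q j) = 0" using j(2) by simp
            then have "(\<integral>\<^sup>+y. epow (g j y) (1 / q j) \<partial>lebn (dd j)) = 0"
              using qj by (simp add: epow_eq_0_iff)
            then have "AE y in lebn (dd j). epow (g j y) (1 / q j) = 0"
              using g_meas[OF jK] by (simp add: nn_integral_0_iff_AE)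
            then have "AE y in lebn (dd j). g j y = 0" by (rule AE_mp) (use qj in \<open>auto simp: epow_eq_0_iff\<close>)
            then have "(\<integral>\<^sup>+y. g j y \<partial>lebn (dd j)) = 0"
              using g_meas[OF jK] by (simp add: nn_integral_0_iff_AE)
            then show ?thesis using int_g[OF jK] by (intro zero_f) simp
          next
            case False
            have NJ: "\<And>j. j \<in> J \<Longrightarrow> N j \<noteq> 0 \<and> N j \<noteq> top" using NJfin False by blast
            show ?thesis by (rule main_case[OF p _ _ BLfin NJ]) (use Pfin Ppos in \<open>simp_all add: P_def\<close>)
          qed
        qed
      qed
    qed
  qed
qed

end

theorem theorem3p1:
  fixes d k :: nat and dd :: "nat \<Rightarrow> nat" and B :: "nat \<Rightarrow> nat \<Rightarrow> nat \<Rightarrow> real"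
    and c \<theta> :: "nat \<Rightarrow> real" and p :: real and q :: "nat \<Rightarrow> real"
    and f :: "(nat \<Rightarrow> real) \<Rightarrow> ennreal" and g :: "nat \<Rightarrow> (nat \<Rightarrow> real) \<Rightarrow> ennreal"
  assumes surj: "\<forall>i\<in>{1..k}. matapp (dd i) d (B i) ` (\<Pi>\<^sub>E j\<in>{..<d}. UNIV)
                              = (\<Pi>\<^sub>E r\<in>{..<dd i}. UNIV)"
    and c_pos: "\<forall>i\<in>{1..k}. c i > 0"
    and p_ge: "p \<ge> 1"
    and theta_nz: "\<forall>i\<in>{1..k}. \<theta> i \<noteq> 0"
    and theta_sum: "(\<Sum>i\<in>{1..k}. \<theta> i) = 1"
    and theta_one_pos: "\<exists>!i. i \<in> {1..k} \<and> \<theta> i > 0"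
    and q_def: "\<forall>i\<in>{1..k}. c i * (1 - 1 / p) = \<theta> i * (1 - q i)"
    and f_meas: "f \<in> borel_measurable (lebn d)"
    and g_push: "\<forall>i\<in>{1..k}. is_pushforward d (dd i) (matapp (dd i) d (B i)) f (g i)"
  shows "Lnorm_inv (lebn d) (1 / p) f
           \<ge> epow (BL d k dd B c) (1 / p - 1)
               * (\<Prod>i\<in>{1..k}. epow (Lnorm_inv (lebn (dd i)) (q i) (g i)) (\<theta> i))"
  proof -
  obtain i0 where i0: "i0 \<in> {1..k}" "\<theta> i0 > 0"
    and uniq: "\<And>i. i \<in> {1..k} \<and> \<theta> i > 0 \<Longrightarrow> i = i0"
    using theta_one_pos by blast
  have others: "\<theta> i < 0" if "i \<in> {1..k}" "i \<noteq> i0" for i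
  proof -
    have "\<theta> i \<noteq> 0" using theta_nz that by blast
    moreover have "\<not> \<theta> i > 0" using uniq that by blast
    ultimately show ?thesis by simp
  qed
  interpret BLsetting d k dd B c \<theta> p q f g i0
    using c_pos p_ge theta_sum i0 others q_def f_meas g_push by unfold_locales auto
  show ?thesis by (rule result)
qed

end
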